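(* In the minimal setting described in the context, one has: (a) $2\gamma'(x)=1-h^\vee-\tfrac12\epsilon(\sigma)$; (b) $\gamma'=2\gamma_{1/2}+\gamma'_0-\tfrac12(h^\vee-1)\theta$ in $(\mathfrak h^\sigma)^*$ (with $\theta$ restricted to $\mathfrak h^\sigma$); (c) $\gamma_{1/2}^\natural=\tfrac12(\gamma'^\natural-\gamma_0'^\natural)$, where $\lambda\mapsto\lambda^\natural$ denotes restriction from $\mathfrak h^\sigma$ to $\mathfrak h^\natural=\{h\in\mathfrak h^\sigma:[h,f]=0\}$.
   Context: Let $\mathfrak g$ be a simple finite-dimensional Lie superalgebra over $\mathbb C$ with a non-degenerate even supersymmetric invariant bilinear form $(\cdot|\cdot)$, let $\theta$ be the highest root of a simple component of $\mathfrak g_{\bar0}$, normalize $(\theta|\theta)=2$, and let $\{e,x,f\}$ be an $\mathfrak{sl}_2$-triple ($[x,e]=e$, $[x,f]=-f$, $[e,f]=x$) with $e,f$ root vectors for $\pm\theta$ and $x=\theta/2$ (via the form), such that $\mathrm{ad}\,x$ gives the minimal grading $\mathfrak g=\mathbb Cf\oplus\mathfrak g_{-1/2}\oplus\mathfrak g_0\oplus\mathfrak g_{1/2}\oplus\mathbb Ce$. Let $h^\vee$ be the dual Coxeter number of $\mathfrak g$ with respect to $(\cdot|\cdot)$ (so that $\mathrm{sdim}\,\mathfrak g_{1/2}=2h^\vee-4$). Let $\sigma$ be an automorphism of $\mathfrak g$ with $\sigma(x)=x$, $\sigma(f)=f$, preserving $(\cdot|\cdot)$, diagonalizable with eigenvalues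 of modulus 1; $\mathfrak g^{\bar\mu}=\{a:\sigma a=e^{2\pi i\bar\mu}a\}$ for $\bar\mu\in\mathbb R/\mathbb Z$. Let $\mathfrak g_j(\sigma)=\{a\in\mathfrak g_j:\sigma a=(-1)^{2j}a\}$, $\mathfrak g(\sigma)=\bigoplus_j\mathfrak g_j(\sigma)$. Fix a $\sigma$-invariant Cartan subalgebra $\mathfrak h$ of the even part of $\mathfrak g_0$ and a decomposition $\mathfrak g(\sigma)=\mathfrak n(\sigma)_-\oplus\mathfrak h^\sigma\oplus\mathfrak n(\sigma)_+$ into graded subspaces, compatible with the $\frac12\mathbb Z$-grading, such that (i) $\mathfrak n(\sigma)_\pm$ are nilpotent subalgebras, isotropic for $(\cdot|\cdot)$, normalized by $\mathfrak h^\sigma$; (ii) $f\in\mathfrak n(\sigma)_+$; (iii) $\mathfrak n_{1/2}(\sigma)_+:=\mathfrak n(\sigma)_+\cap\mathfrak g_{1/2}$ is maximal isotropic in $\mathfrak g_{1/2}(\sigma)$ for $\langle a,b\rangle_{ne}=(f|[a,b])$; (iv) $\mathfrak n_{1/2}(\sigma)_-=\mathfrak n'\oplus\mathfrak g_{1/2}(\sigma)_0$ with $\mathfrak n'$ maximal isotropic for $\langle\cdot,\cdot\rangle_{ne}$ and $\mathfrak g_{1/2}(\sigma)_0$ of dimension $\epsilon(\sigma)\le1$, normalized by $\mathfrak h^\sigma$. Choose a homogeneous basis $\{u_i\}_{i\in S}$ of $\mathfrak g$ compatible with the grading, the $\sigma$-eigenspaces, the $\mathrm{ad}\,\mathfrak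 h^\sigma$-weight decomposition, containing a basis of $\mathfrak h^\sigma$, with each basis vector lying in $\mathfrak g(\sigma)$ belonging to one of $\mathfrak n(\sigma)_+$, $\mathfrak h^\sigma$, $\mathfrak n(\sigma)_-$, and each basis vector of $\mathfrak g_{1/2}(\sigma)$ lying in one of $\mathfrak n_{1/2}(\sigma)_+$, $\mathfrak g_{1/2}(\sigma)_0$, $\mathfrak n'$. Let $S'$ index the basis vectors not in $\mathfrak h^\sigma$, and $S_j=\{i\in S': u_i\in\mathfrak g_j\}$. For $i\in S'$ with $u_i\in\mathfrak g_{m_i}\cap\mathfrak g^{\bar\mu_i}$, let $\alpha_i\in(\mathfrak h^\sigma)^*$ be its weight, $\tilde p(i)=(-1)^{p(u_i)}$, and $s_i=-m_i$ if $u_i\in\mathfrak n(\sigma)_+$, $s_i=\min\{n\in\bar\mu_i:n>-m_i\}$ otherwise. Define $\gamma'=\frac12\sum_{i\in S'}\tilde p(i)s_i\alpha_i$, $\gamma'_0=\frac12\sum_{i\in S_0}\tilde p(i)s_i\alpha_i$, $\gamma_{1/2}=\frac12\sum_{i\in S_{1/2}}\tilde p(i)s_i\alpha_i$. *)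

theory Defs
  imports Complex_Main
begin

text \<open>A finite-dimensional complex Lie superalgebra is given in coordinates with respect
  to a fixed homogeneous basis indexed by a finite type 'i: vectors are functions
  'i => complex, the basis vector u_i is ub i, parities are p i (True = odd),
  the bracket is given by structure constants c i j k, the bilinear form by its
  Gram matrix B i j = (u_i | u_j).\<close>

type_synonym 'i vec = "'i \<Rightarrow> complex"

definition vzero :: "'i vec" where "vzero = (\<lambda>_. 0)"
definition vadd :: "'i vec \<Rightarrow> 'i vec \<Rightarrow> 'i vec" where "vadd a b = (\<lambda>k. a k + b k)"
definition vsc :: "complex \<Rightarrow> 'i vec \<Rightarrow> 'i vec" where "vsc t a = (\<lambda>k. t * a k)"
definition ub :: "'i \<Rightarrow> 'i vec" where "ub i = (\<lambda>k. if k = i then 1 else 0)"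
definition supp_on :: "'i set \<Rightarrow> 'i vec set" where
  "supp_on A = {a. \<forall>k. k \<notin> A \<longrightarrow> a k = 0}"
definition psign :: "bool \<Rightarrow> complex" where "psign b = (if b then -1 else 1)"

definition brk :: "('i::finite \<Rightarrow> 'i \<Rightarrow> 'i \<Rightarrow> complex) \<Rightarrow> 'i vec \<Rightarrow> 'i vec \<Rightarrow> 'i vec" where
  "brk c a b = (\<lambda>k. \<Sum>i\<in>UNIV. \<Sum>j\<in>UNIV. a i * b j * c i j k)"

definition frm :: "('i::finite \<Rightarrow> 'i \<Rightarrow> complex) \<Rightarrow> 'i vec \<Rightarrow> 'i vec \<Rightarrow> complex" where
  "frm B a b = (\<Sum>i\<in>UNIV. \<Sum>j\<in>UNIV. a i * b j * B i j)"

definition subspace :: "'i vec set \<Rightarrow> bool" where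
  "subspace V \<longleftrightarrow> vzero \<in> V \<and> (\<forall>a\<in>V. \<forall>b\<in>V. vadd a b \<in> V) \<and> (\<forall>t a. a \<in> V \<longrightarrow> vsc t a \<in> V)"

definition even_part :: "('i \<Rightarrow> bool) \<Rightarrow> 'i vec \<Rightarrow> 'i vec" where
  "even_part p a = (\<lambda>k. if p k then 0 else a k)"
definition odd_part :: "('i \<Rightarrow> bool) \<Rightarrow> 'i vec \<Rightarrow> 'i vec" where
  "odd_part p a = (\<lambda>k. if p k then a k else 0)"

definition lie_superalgebra :: "('i::finite \<Rightarrow> bool) \<Rightarrow> ('i \<Rightarrow> 'i \<Rightarrow> 'i \<Rightarrow> complex) \<Rightarrow> bool" where
  "lie_superalgebra p c \<longleftrightarrow>
     (\<forall>i j k. c i j k \<noteq> 0 \<longrightarrow> p k = (p i \<noteq> p j)) \<and>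
     (\<forall>i j k. c i j k = - psign (p i \<and> p j) * c j i k) \<and>
     (\<forall>i j l. brk c (ub i) (brk c (ub j) (ub l)) =
        vadd (brk c (brk c (ub i) (ub j)) (ub l))
             (vsc (psign (p i \<and> p j)) (brk c (ub j) (brk c (ub i) (ub l)))))"

definition graded_ideal :: "('i::finite \<Rightarrow> bool) \<Rightarrow> ('i \<Rightarrow> 'i \<Rightarrow> 'i \<Rightarrow> complex) \<Rightarrow> 'i vec set \<Rightarrow> bool" where
  "graded_ideal p c I \<longleftrightarrow> subspace I \<and> (\<forall>a\<in>I. even_part p a \<in> I \<and> odd_part p a \<in> I) \<and>
     (\<forall>a b. b \<in> I \<longrightarrow> brk c a b \<in> I)"

definition simple_lie_superalgebra :: "('i::finite \<Rightarrow> bool) \<Rightarrow> ('i \<Rightarrow> 'i \<Rightarrow> 'i \<Rightarrow> complex) \<Rightarrow> bool" where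
  "simple_lie_superalgebra p c \<longleftrightarrow> lie_superalgebra p c \<and> (\<exists>a b. brk c a b \<noteq> vzero) \<and>
     (\<forall>I. graded_ideal p c I \<longrightarrow> I = {vzero} \<or> I = UNIV)"

definition good_form :: "('i::finite \<Rightarrow> bool) \<Rightarrow> ('i \<Rightarrow> 'i \<Rightarrow> 'i \<Rightarrow> complex) \<Rightarrow> ('i \<Rightarrow> 'i \<Rightarrow> complex) \<Rightarrow> bool" where
  "good_form p c B \<longleftrightarrow>
     (\<forall>a. (\<forall>b. frm B a b = 0) \<longrightarrow> a = vzero) \<and>
     (\<forall>i j. B i j \<noteq> 0 \<longrightarrow> p i = p j) \<and>
     (\<forall>i j. B i j = psign (p i \<and> p j) * B j i) \<and>
     (\<forall>a b d. frm B (brk c a b) d = frm B a (brk c b d))"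

text \<open>Dual basis u^i = sum_k D i k u_k with (u^i | u_j) = delta_ij; Casimir operator
  Omega(a) = sum_i [u_i,[u^i,a]]; the dual Coxeter number hv is defined by Omega = 2 hv on g.\<close>
definition dual_basis :: "('i::finite \<Rightarrow> 'i \<Rightarrow> complex) \<Rightarrow> ('i \<Rightarrow> 'i \<Rightarrow> complex) \<Rightarrow> bool" where
  "dual_basis B D \<longleftrightarrow> (\<forall>i j. frm B (\<lambda>l. D i l) (ub j) = (if i = j then 1 else 0))"

definition casimir :: "('i::finite \<Rightarrow> 'i \<Rightarrow> 'i \<Rightarrow> complex) \<Rightarrow> ('i \<Rightarrow> 'i \<Rightarrow> complex) \<Rightarrow> 'i vec \<Rightarrow> 'i vec" where
  "casimir c D a = (\<lambda>l. \<Sum>i\<in>UNIV. \<Sum>k\<in>UNIV. D i k * brk c (ub i) (brk c (ub k) a) l)"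

definition dual_coxeter :: "('i::finite \<Rightarrow> 'i \<Rightarrow> 'i \<Rightarrow> complex) \<Rightarrow> ('i \<Rightarrow> 'i \<Rightarrow> complex) \<Rightarrow> complex \<Rightarrow> bool" where
  "dual_coxeter c B hv \<longleftrightarrow> (\<exists>D. dual_basis B D \<and> (\<forall>a. casimir c D a = vsc (2 * hv) a))"

definition subalg :: "('i::finite \<Rightarrow> 'i \<Rightarrow> 'i \<Rightarrow> complex) \<Rightarrow> 'i vec set \<Rightarrow> bool" where
  "subalg c A \<longleftrightarrow> subspace A \<and> (\<forall>a\<in>A. \<forall>b\<in>A. brk c a b \<in> A)"

definition nilpotent_sub :: "('i::finite \<Rightarrow> 'i \<Rightarrow> 'i \<Rightarrow> complex) \<Rightarrow> 'i vec set \<Rightarrow> bool" where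
  "nilpotent_sub c A \<longleftrightarrow> (\<exists>n. \<forall>as b. set as \<subseteq> A \<and> length as = n \<and> b \<in> A \<longrightarrow> foldr (brk c) as b = vzero)"

definition cartan_sub :: "('i::finite \<Rightarrow> 'i \<Rightarrow> 'i \<Rightarrow> complex) \<Rightarrow> 'i vec set \<Rightarrow> 'i vec set \<Rightarrow> bool" where
  "cartan_sub c L h \<longleftrightarrow> subalg c h \<and> h \<subseteq> L \<and> nilpotent_sub c h \<and>
     {a \<in> L. \<forall>b\<in>h. brk c a b \<in> h} = h"

definition max_isotropic :: "('i vec \<Rightarrow> 'i vec \<Rightarrow> complex) \<Rightarrow> 'i vec set \<Rightarrow> 'i vec set \<Rightarrow> bool" where
  "max_isotropic \<beta> V W \<longleftrightarrow> subspace W \<and> W \<subseteq> V \<and> (\<forall>a\<in>W. \<forall>b\<in>W. \<beta> a b = 0) \<and>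
     (\<forall>W'. subspace W' \<and> W \<subseteq> W' \<and> W' \<subseteq> V \<and> (\<forall>a\<in>W'. \<forall>b\<in>W'. \<beta> a b = 0) \<longrightarrow> W' = W)"

definition sig :: "('i \<Rightarrow> real) \<Rightarrow> 'i vec \<Rightarrow> 'i vec" where
  "sig mu a = (\<lambda>k. cis (2 * pi * mu k) * a k)"

text \<open>Weight of u_i evaluated at h (meaningful when u_i is an ad h-eigenvector).\<close>
definition wt :: "('i::finite \<Rightarrow> 'i \<Rightarrow> 'i \<Rightarrow> complex) \<Rightarrow> 'i \<Rightarrow> 'i vec \<Rightarrow> complex" where
  "wt c i h = brk c h (ub i) i"

definition sval :: "'i set \<Rightarrow> ('i \<Rightarrow> real) \<Rightarrow> ('i \<Rightarrow> real) \<Rightarrow> 'i \<Rightarrow> real" where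
  "sval Np m mu i = (if i \<in> Np then - m i
     else (LEAST n::real. (\<exists>k::int. n = mu i + of_int k) \<and> n > - m i))"

definition gam :: "('i::finite \<Rightarrow> 'i \<Rightarrow> 'i \<Rightarrow> complex) \<Rightarrow> ('i \<Rightarrow> bool) \<Rightarrow> 'i set \<Rightarrow> ('i \<Rightarrow> real) \<Rightarrow> ('i \<Rightarrow> real)
     \<Rightarrow> 'i set \<Rightarrow> 'i vec \<Rightarrow> complex" where
  "gam c p Np m mu A h = (1/2) * (\<Sum>i\<in>A. psign (p i) * of_real (sval Np m mu i) * wt c i h)"

end

theory Submission
  imports Defs
begin

lemma if0_mult[simp]:
  "(if P then (a::complex) else 0) * y = (if P then a * y else 0)"
  "y * (if P then (a::complex) else 0) = (if P then y * a else 0)"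
  by simp_all

lemma sum_if_const[simp]: "(\<Sum>j\<in>S. if P then g j else (0::complex)) = (if P then (\<Sum>j\<in>S. g j) else 0)"
  by simp

lemma sum_ub_left[simp]: "(\<Sum>i\<in>UNIV. ub j i * g i) = (g j :: complex)"
  for g :: "'i::finite \<Rightarrow> complex"
  by (simp add: ub_def)

lemma sum_ub_right[simp]: "(\<Sum>i\<in>UNIV. g i * ub j i) = (g j :: complex)"
  for g :: "'i::finite \<Rightarrow> complex"
  by (simp add: ub_def)

lemma brk_ub_ub: "brk c (ub i) (ub j) = (\<lambda>k. c i j k)"
  unfolding brk_def by (simp add: ub_def)

lemma brk_ub_left: "brk c (ub i) b = (\<lambda>k. \<Sum>j\<in>UNIV. b j * c i j k)"
  unfolding brk_def by (simp add: ub_def)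

lemma brk_ub_right: "brk c a (ub j) = (\<lambda>k. \<Sum>i\<in>UNIV. a i * c i j k)"
  unfolding brk_def by (simp add: ub_def)

lemma frm_ub_ub: "frm B (ub i) (ub j) = B i j"
  unfolding frm_def by (simp add: ub_def)

lemma frm_ub_right: "frm B a (ub j) = (\<Sum>i\<in>UNIV. a i * B i j)"
  unfolding frm_def by (simp add: ub_def)

lemma frm_ub_left: "frm B (ub i) b = (\<Sum>j\<in>UNIV. b j * B i j)"
  unfolding frm_def by (simp add: ub_def)

lemma frm_expand_right: "frm B a b = (\<Sum>j\<in>UNIV. b j * frm B a (ub j))"
  unfolding frm_ub_right unfolding frm_def
  by (simp add: sum_distrib_left mult_ac) (rule sum.swap)

lemma brk_expand_right: "brk c a b k = (\<Sum>j\<in>UNIV. b j * brk c a (ub j) k)"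
  unfolding brk_ub_right unfolding brk_def
  by (simp add: sum_distrib_left mult_ac) (rule sum.swap)

lemma brk_expand_left: "brk c a b k = (\<Sum>i\<in>UNIV. a i * brk c (ub i) b k)"
  unfolding brk_ub_left unfolding brk_def
  by (simp add: sum_distrib_left mult_ac)

lemma supp_sum: "v \<in> supp_on I \<Longrightarrow> (\<Sum>i\<in>UNIV. v i * g i) = (\<Sum>i\<in>I. v i * g i)"
  for v :: "'i::finite vec"
  unfolding supp_on_def by (intro sum.mono_neutral_right) auto

lemma frm_bil:
  "frm B (vadd a b) d = frm B a d + frm B b d"
  "frm B (vsc t a) d = t * frm B a d"
  "frm B d (vadd a b) = frm B d a + frm B d b"
  "frm B d (vsc t a) = t * frm B d a"
  unfolding frm_def vadd_def vsc_def
  by (simp_all add: algebra_simps sum.distrib sum_distrib_left)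

lemma brk_bil:
  "brk c (vadd a b) d = vadd (brk c a d) (brk c b d)"
  "brk c (vsc t a) d = vsc t (brk c a d)"
  "brk c d (vadd a b) = vadd (brk c d a) (brk c d b)"
  "brk c d (vsc t a) = vsc t (brk c d a)"
  unfolding brk_def vadd_def vsc_def
  by (simp_all add: algebra_simps sum.distrib sum_distrib_left)

lemma brk_zero: "brk c vzero b = vzero" "brk c b vzero = vzero"
  unfolding brk_def vzero_def by simp_all

lemma frm_zero: "frm B vzero b = 0" "frm B b vzero = 0"
  unfolding frm_def vzero_def by simp_all



lemma card_le_of_inj_aux:
  fixes J :: "'j set"
  assumes "finite J"
  shows "\<forall>(I::'i::finite set) (M::'i \<Rightarrow> 'j \<Rightarrow> complex).
     (\<forall>v. v \<in> supp_on I \<and> (\<forall>j\<in>J. (\<Sum>k\<in>I. v k * M k j) = 0) \<longrightarrow> v = vzero)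
     \<longrightarrow> card I \<le> card J"
  using assms
proof (induction J rule: finite_induct)
  case empty
  show ?case
  proof (intro allI impI)
    fix I :: "'i set" and M :: "'i \<Rightarrow> 'j \<Rightarrow> complex"
    assume h: "\<forall>v. v \<in> supp_on I \<and> (\<forall>j\<in>{}. (\<Sum>k\<in>I. v k * M k j) = 0) \<longrightarrow> v = vzero"
    have "I = {}"
    proof (rule ccontr)
      assume "I \<noteq> {}"
      then obtain i where "i \<in> I" by blast
      then have "ub i \<in> supp_on I" by (auto simp: supp_on_def ub_def)
      then have "ub i = vzero" using h by blast
      then show False by (metis ub_def vzero_def zero_neq_one)
    qed
    then show "card I \<le> card {}" by simp
  qed
next
  case (insert j J)
  show ?case
  proof (intro allI impI)
    fix I :: "'i set" and M :: "'i \<Rightarrow> 'j \<Rightarrow> complex"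
    assume h: "\<forall>v. v \<in> supp_on I \<and> (\<forall>j'\<in>insert j J. (\<Sum>k\<in>I. v k * M k j') = 0) \<longrightarrow> v = vzero"
    show "card I \<le> card (insert j J)"
    proof (cases "\<forall>k\<in>I. M k j = 0")
      case True
      have "\<forall>v. v \<in> supp_on I \<and> (\<forall>j'\<in>J. (\<Sum>k\<in>I. v k * M k j') = 0) \<longrightarrow> v = vzero"
        using h True by auto
      then have "card I \<le> card J" using insert.IH by blast
      then show ?thesis using insert by simp
    next
      case False
      then obtain i0 where i0: "i0 \<in> I" "M i0 j \<noteq> 0" by blast
      define I' where "I' = I - {i0}"
      define M' where "M' = (\<lambda>k j'. M k j' - (M k j / M i0 j) * M i0 j')"
      have "\<forall>v. v \<in> supp_on I' \<and> (\<forall>j'\<in>J. (\<Sum>k\<in>I'. v k * M' k j') = 0) \<longrightarrow> v = vzero"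
      proof (intro allI impI)
        fix v assume hv: "v \<in> supp_on I' \<and> (\<forall>j'\<in>J. (\<Sum>k\<in>I'. v k * M' k j') = 0)"
        define r where "r = - (\<Sum>k\<in>I'. v k * M k j) / M i0 j"
        define w where "w = (\<lambda>k. if k = i0 then r else v k)"
        have vi0: "v i0 = 0" using hv by (auto simp: supp_on_def I'_def)
        have fin: "finite I" by simp
        have sumI: "(\<Sum>k\<in>I. w k * g k) = r * g i0 + (\<Sum>k\<in>I'. v k * g k)" for g
        proof -
          have "(\<Sum>k\<in>I. w k * g k) = w i0 * g i0 + (\<Sum>k\<in>I'. w k * g k)"
            unfolding I'_def by (rule sum.remove[OF fin i0(1)])
          also have "(\<Sum>k\<in>I'. w k * g k) = (\<Sum>k\<in>I'. v k * g k)"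
            by (rule sum.cong) (auto simp: w_def I'_def)
          finally show ?thesis by (simp add: w_def)
        qed
        have wsupp: "w \<in> supp_on I" using hv i0 by (auto simp: supp_on_def w_def I'_def)
        have "\<forall>j'\<in>insert j J. (\<Sum>k\<in>I. w k * M k j') = 0"
        proof
          fix j' assume "j' \<in> insert j J"
          then consider "j' = j" | "j' \<in> J" by blast
          then show "(\<Sum>k\<in>I. w k * M k j') = 0"
          proof cases
            case 1
            then show ?thesis unfolding sumI using i0 by (simp add: r_def)
          next
            case 2
            have "(\<Sum>k\<in>I'. v k * M' k j') = (\<Sum>k\<in>I'. v k * M k j') - (\<Sum>k\<in>I'. v k * M k j) / M i0 j * M i0 j'"
              by (simp add: M'_def algebra_simps sum_subtractf sum_distrib_left sum_divide_distrib sum_distrib_right)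
            then have "(\<Sum>k\<in>I'. v k * M k j') = (\<Sum>k\<in>I'. v k * M k j) / M i0 j * M i0 j'"
              using hv 2 by simp
            then show ?thesis unfolding sumI by (simp add: r_def)
          qed
        qed
        then have "w = vzero" using h wsupp by blast
        then show "v = vzero"
          unfolding vzero_def fun_eq_iff by (metis vi0 w_def)
      qed
      then have "card I' \<le> card J" using insert.IH by blast
      moreover have "card I = card I' + 1" using card_Suc_Diff1[of I i0] i0 unfolding I'_def by simp
      ultimately show ?thesis using insert by simp
    qed
  qed
qed

lemma card_le_of_inj:
  fixes M :: "'i::finite \<Rightarrow> 'j \<Rightarrow> complex"
  assumes "finite J"
    "\<And>v. v \<in> supp_on I \<Longrightarrow> (\<forall>j\<in>J. (\<Sum>k\<in>I. v k * M k j) = 0) \<Longrightarrow> v = vzero"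
  shows "card I \<le> card J"
  using card_le_of_inj_aux[OF assms(1)] assms(2) by blast

lemma kernel_vec:
  fixes M :: "'i::finite \<Rightarrow> 'j \<Rightarrow> complex" and I :: "'i set"
  assumes "finite J" "card J < card I"
  shows "\<exists>v\<in>supp_on I. v \<noteq> vzero \<and> (\<forall>j\<in>J. (\<Sum>k\<in>I. v k * M k j) = 0)"
  using card_le_of_inj[OF assms(1), of I M] assms(2) by force

lemma kernel_vec2:
  fixes M :: "'i::finite \<Rightarrow> 'j \<Rightarrow> complex" and I :: "'i set"
  assumes "finite J" "card J + 2 \<le> card I"
  shows "\<exists>u1\<in>supp_on I. \<exists>u2\<in>supp_on I. \<exists>k\<in>I. u1 k \<noteq> 0 \<and> u2 k = 0 \<and> u2 \<noteq> vzero \<and>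
     (\<forall>j\<in>J. (\<Sum>k\<in>I. u1 k * M k j) = 0) \<and> (\<forall>j\<in>J. (\<Sum>k\<in>I. u2 k * M k j) = 0)"
proof -
  obtain u1 where u1: "u1 \<in> supp_on I" "u1 \<noteq> vzero" "\<forall>j\<in>J. (\<Sum>k\<in>I. u1 k * M k j) = 0"
    using kernel_vec[OF assms(1), of I M] assms(2) by auto
  obtain k where k: "u1 k \<noteq> 0" using u1(2) by (auto simp: vzero_def fun_eq_iff)
  have kI: "k \<in> I" using u1(1) k by (auto simp: supp_on_def)
  have "card J < card (I - {k})" using assms(2) kI by simp
  then obtain u2 where u2: "u2 \<in> supp_on (I - {k})" "u2 \<noteq> vzero" "\<forall>j\<in>J. (\<Sum>k\<in>I-{k}. u2 k * M k j) = 0"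
    using kernel_vec[OF assms(1), of "I - {k}" M] by auto
  have u2k: "u2 k = 0" using u2(1) by (auto simp: supp_on_def)
  have u2I: "u2 \<in> supp_on I" using u2(1) by (auto simp: supp_on_def)
  have eq: "(\<Sum>k\<in>I. u2 k * M k j) = (\<Sum>k\<in>I-{k}. u2 k * M k j)" for j
    by (rule sum.mono_neutral_right) (use u2k in auto)
  have "\<forall>j\<in>J. (\<Sum>k\<in>I. u2 k * M k j) = 0" using u2(3) eq by simp
  then show ?thesis using u1(1,3) u2I u2k u2(2) kI k by blast
qed

lemma sum_fiber:
  fixes kA :: "'a \<Rightarrow> 'k" and kB :: "'b \<Rightarrow> 'k" and F :: "'a \<Rightarrow> 'c::comm_ring_1"
  assumes "finite A" "finite B"
    "\<And>v. card {i\<in>A. kA i = v} = card {j\<in>B. kB j = v}"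
    "\<And>i j. i \<in> A \<Longrightarrow> j \<in> B \<Longrightarrow> kA i = kB j \<Longrightarrow> F i = G j"
  shows "sum F A = sum G B"
proof -
  have im: "kA ` A = kB ` B"
  proof -
    have "v \<in> kA ` A \<longleftrightarrow> v \<in> kB ` B" for v
    proof -
      have "v \<in> kA ` A \<longleftrightarrow> {i\<in>A. kA i = v} \<noteq> {}" by auto
      also have "\<dots> \<longleftrightarrow> card {i\<in>A. kA i = v} \<noteq> 0" using assms(1) by simp
      also have "\<dots> \<longleftrightarrow> card {j\<in>B. kB j = v} \<noteq> 0" using assms(3) by simp
      also have "\<dots> \<longleftrightarrow> {j\<in>B. kB j = v} \<noteq> {}" using assms(2) by simp
      also have "\<dots> \<longleftrightarrow> v \<in> kB ` B" by auto
      finally show ?thesis .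
    qed
    then show ?thesis by blast
  qed
  have "sum F A = (\<Sum>v\<in>kA ` A. \<Sum>i\<in>{i\<in>A. kA i = v}. F i)"
    using assms(1) by (rule sum.image_gen)
  also have "\<dots> = (\<Sum>v\<in>kB ` B. \<Sum>j\<in>{j\<in>B. kB j = v}. G j)"
  proof (rule sum.cong[OF im])
    fix v assume "v \<in> kB ` B"
    then obtain j0 where j0: "j0 \<in> B" "kB j0 = v" by auto
    then obtain i0 where i0: "i0 \<in> A" "kA i0 = v" using im by (metis imageE imageI)
    have "(\<Sum>i\<in>{i\<in>A. kA i = v}. F i) = (\<Sum>i\<in>{i\<in>A. kA i = v}. G j0)"
      by (rule sum.cong) (use assms(4) j0 in auto)
    also have "\<dots> = of_nat (card {i\<in>A. kA i = v}) * G j0" by simp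
    also have "\<dots> = of_nat (card {j\<in>B. kB j = v}) * G j0" using assms(3) by simp
    also have "\<dots> = (\<Sum>j\<in>{j\<in>B. kB j = v}. G j0)" by simp
    also have "\<dots> = (\<Sum>j\<in>{j\<in>B. kB j = v}. G j)"
    proof (rule sum.cong)
      fix j assume "j \<in> {j\<in>B. kB j = v}"
      then show "G j0 = G j" using assms(4)[of i0 j0] assms(4)[of i0 j] i0 j0 by auto
    qed simp
    finally show "(\<Sum>i\<in>{i\<in>A. kA i = v}. F i) = (\<Sum>j\<in>{j\<in>B. kB j = v}. G j)" .
  qed
  also have "\<dots> = sum G B"
    using assms(2) by (rule sum.image_gen[symmetric])
  finally show ?thesis .
qed

lemma quad_root: "(a::complex) \<noteq> 0 \<Longrightarrow> \<exists>l. a * l^2 + b * l + c = 0"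
proof -
  assume a: "a \<noteq> 0"
  define s where "s = csqrt (b^2 - 4*a*c)"
  define l where "l = (- b + s) / (2*a)"
  have s2: "s^2 = b^2 - 4*a*c" unfolding s_def by simp
  have ls: "2*a*l + b = s" unfolding l_def using a by (simp add: field_simps)
  have "4*a*(a * l^2 + b * l + c) = (2*a*l+b)^2 - (b^2 - 4*a*c)"
    by (simp add: algebra_simps power2_eq_square)
  also have "\<dots> = 0" using ls s2 by simp
  finally have "a * l^2 + b * l + c = 0" using a by simp
  then show ?thesis by blast
qed



lemma one_dim:
  fixes v :: "'i::finite vec"
  assumes "supp_on S = {vsc t v |t. True}" "v \<noteq> vzero"
  shows "\<exists>j. S = {j} \<and> v = vsc (v j) (ub j) \<and> v j \<noteq> 0"
proof -
  have "v \<in> {vsc t v |t. True}" by (rule CollectI, rule exI[of _ 1]) (simp add: vsc_def)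
  then have vS: "v \<in> supp_on S" using assms(1) by simp
  obtain j where j: "v j \<noteq> 0" using assms(2) by (auto simp: vzero_def fun_eq_iff)
  have jS: "j \<in> S" using vS j by (auto simp: supp_on_def)
  have "i = j" if "i \<in> S" for i
  proof (rule ccontr)
    assume ij: "i \<noteq> j"
    have "ub i \<in> supp_on S" using that by (auto simp: supp_on_def ub_def)
    then obtain t where t: "ub i = vsc t v" using assms(1) by auto
    have "t * v j = 0" using t ij by (metis ub_def vsc_def)
    then have "t = 0" using j by simp
    then have "ub i i = 0" using t by (simp add: vsc_def)
    then show False by (simp add: ub_def)
  qed
  then have S: "S = {j}" using jS by blast
  have "v = vsc (v j) (ub j)"
    using vS S by (auto simp: supp_on_def vsc_def ub_def fun_eq_iff)
  then show ?thesis using S j by blast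
qed

lemma cis_eq_int: "cis (2*pi*a) = cis (2*pi*b) \<Longrightarrow> \<exists>z::int. a = b + of_int z"
proof -
  assume "cis (2*pi*a) = cis (2*pi*b)"
  then have "cis (2*pi*(a-b)) = 1" by (simp add: cis_divide[symmetric] algebra_simps)
  then have "sin (2*pi*(a-b)) = 0 \<and> cos (2*pi*(a-b)) = 1" by (simp add: complex_eq_iff)
  then obtain n::int where "2*pi*(a-b) = of_int n * 2 * pi"
    using cos_one_2pi_int by blast
  then have "a = b + of_int n" by simp
  then show ?thesis by blast
qed

locale ctx =

  fixes p :: "'i::finite \<Rightarrow> bool"
    and c :: "'i \<Rightarrow> 'i \<Rightarrow> 'i \<Rightarrow> complex"
    and B :: "'i \<Rightarrow> 'i \<Rightarrow> complex"
    and hv :: complex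
    and x e f :: "'i vec"
    and m mu :: "'i \<Rightarrow> real"
    and hC :: "'i vec set"
    and H Np Nm Z0 :: "'i set"
  assumes simple: "simple_lie_superalgebra p c"
    and form: "good_form p c B"
    and hvee: "dual_coxeter c B hv"
    \<comment> \<open>sl_2-triple and minimal grading by ad x (u_i in g_{m_i})\<close>
    and sl2: "brk c x e = e" "brk c x f = vsc (-1) f" "brk c e f = x"
    and ef_even: "e \<in> supp_on {i. \<not> p i}" "f \<in> supp_on {i. \<not> p i}" "e \<noteq> vzero"
    and grading: "\<forall>i. brk c x (ub i) = vsc (of_real (m i)) (ub i)"
    and grading_vals: "\<forall>i. m i \<in> {-1, -1/2, 0, 1/2, 1}"
    and g1: "supp_on {i. m i = 1} = {vsc t e |t. True}"
    and gm1: "supp_on {i. m i = -1} = {vsc t f |t. True}"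
    \<comment> \<open>Cartan subalgebra hC of the even part of g_0, sigma-invariant; x = theta/2 via the form,
        (theta|theta) = 2, e and f root vectors for theta and -theta\<close>
    and cartan: "cartan_sub c (supp_on {i. m i = 0 \<and> \<not> p i}) hC"
    and x_in: "x \<in> hC"
    and roots: "\<forall>h\<in>hC. brk c h e = vsc (2 * frm B x h) e"
               "\<forall>h\<in>hC. brk c h f = vsc (- (2 * frm B x h)) f"
    and theta_norm: "frm B x x = 1/2"
    and sig_aut: "\<forall>a b. sig mu (brk c a b) = brk c (sig mu a) (sig mu b)"
    and sig_form: "\<forall>a b. frm B (sig mu a) (sig mu b) = frm B a b"
    and sig_x: "sig mu x = x" and sig_f: "sig mu f = f"
    and hC_inv: "sig mu ` hC \<subseteq> hC"
    and H_basis: "supp_on H = {a \<in> hC. sig mu a = a}"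
    and weights: "\<forall>i. \<forall>h\<in>supp_on H. \<exists>t. brk c h (ub i) = vsc t (ub i)"
    \<comment> \<open>g(sigma) = n_- + h^sigma + n_+ (basis indices)\<close>
    and decomp: "{i. cis (2 * pi * mu i) = cis (pi * (2 * m i))} = Np \<union> H \<union> Nm"
    and disj: "Np \<inter> H = {}" "Nm \<inter> H = {}" "Np \<inter> Nm = {}"
    and nplus: "subalg c (supp_on Np)" "nilpotent_sub c (supp_on Np)"
               "\<forall>a\<in>supp_on Np. \<forall>b\<in>supp_on Np. frm B a b = 0"
               "\<forall>h\<in>supp_on H. \<forall>a\<in>supp_on Np. brk c h a \<in> supp_on Np"
    and nminus: "subalg c (supp_on Nm)" "nilpotent_sub c (supp_on Nm)"
               "\<forall>a\<in>supp_on Nm. \<forall>b\<in>supp_on Nm. frm B a b = 0"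
               "\<forall>h\<in>supp_on H. \<forall>a\<in>supp_on Nm. brk c h a \<in> supp_on Nm"
    and f_plus: "f \<in> supp_on Np"
    and iii: "max_isotropic (\<lambda>a b. frm B f (brk c a b))
                (supp_on {i. cis (2 * pi * mu i) = cis (pi * (2 * m i)) \<and> m i = 1/2})
                (supp_on (Np \<inter> {i. m i = 1/2}))"
    and iv: "Z0 \<subseteq> Nm \<inter> {i. m i = 1/2}" "card Z0 \<le> 1"
            "max_isotropic (\<lambda>a b. frm B f (brk c a b))
                (supp_on {i. cis (2 * pi * mu i) = cis (pi * (2 * m i)) \<and> m i = 1/2})
                (supp_on (Nm \<inter> {i. m i = 1/2} - Z0))"

begin

lemma lsa: "lie_superalgebra p c" using simple by (simp add: simple_lie_superalgebra_def)

lemma c_antisym: "c i j k = - psign (p i \<and> p j) * c j i k"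
  using lsa unfolding lie_superalgebra_def by blast

lemma par: "c i j k \<noteq> 0 \<Longrightarrow> p k = (p i \<noteq> p j)"
  using lsa unfolding lie_superalgebra_def by blast

lemma jac: "(\<Sum>n\<in>UNIV. c j l n * c i n k) =
   (\<Sum>n\<in>UNIV. c i j n * c n l k) + psign (p i \<and> p j) * (\<Sum>n\<in>UNIV. c i l n * c j n k)"
proof -
  have "brk c (ub i) (brk c (ub j) (ub l)) =
        vadd (brk c (brk c (ub i) (ub j)) (ub l))
             (vsc (psign (p i \<and> p j)) (brk c (ub j) (brk c (ub i) (ub l))))"
    using lsa unfolding lie_superalgebra_def by blast
  then have "brk c (ub i) (brk c (ub j) (ub l)) k =
        vadd (brk c (brk c (ub i) (ub j)) (ub l))
             (vsc (psign (p i \<and> p j)) (brk c (ub j) (brk c (ub i) (ub l)))) k" by simp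
  then show ?thesis unfolding brk_ub_ub brk_ub_left brk_ub_right vadd_def vsc_def by simp
qed

lemma fnd: "(\<And>b. frm B a b = 0) \<Longrightarrow> a = vzero"
  using form unfolding good_form_def by blast
lemma Bpar: "B i j \<noteq> 0 \<Longrightarrow> p i = p j"
  using form unfolding good_form_def by blast
lemma Bsym: "B i j = psign (p i \<and> p j) * B j i"
  using form unfolding good_form_def by blast
lemma finv: "frm B (brk c a b) d = frm B a (brk c b d)"
  using form unfolding good_form_def by blast

lemma hC_sub: "hC \<subseteq> supp_on {i. m i = 0 \<and> \<not> p i}"
  using cartan by (simp add: cartan_sub_def)

lemma H_sub: "supp_on H \<subseteq> hC" using H_basis by auto

lemma H_ev: "h \<in> supp_on H \<Longrightarrow> h k \<noteq> 0 \<Longrightarrow> m k = 0 \<and> \<not> p k"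
  using H_sub hC_sub by (auto simp: supp_on_def)

lemma ub_H: "i \<in> H \<Longrightarrow> ub i \<in> supp_on H"
  by (auto simp: supp_on_def ub_def)

lemma H_ev_i: "i \<in> H \<Longrightarrow> m i = 0 \<and> \<not> p i"
  using H_ev[OF ub_H, of i i] by (simp add: ub_def)

lemma x_H: "x \<in> supp_on H" using H_basis x_in sig_x by auto

lemma wt_vec: "h \<in> supp_on H \<Longrightarrow> brk c h (ub i) = vsc (wt c i h) (ub i)"
proof -
  assume h: "h \<in> supp_on H"
  obtain t where t: "brk c h (ub i) = vsc t (ub i)" using weights h by blast
  then have "wt c i h = t" by (simp add: wt_def vsc_def ub_def)
  then show ?thesis using t by simp
qed

lemma wt_ub: "wt c k (ub i) = c i k k"
  by (simp add: wt_def brk_ub_ub)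

lemma wt_lin: "h \<in> supp_on H \<Longrightarrow> wt c k h = (\<Sum>i\<in>H. h i * wt c k (ub i))"
  unfolding wt_ub unfolding wt_def brk_ub_right by (rule supp_sum)

lemma cH: "i \<in> H \<Longrightarrow> c i j k = (if k = j then wt c j (ub i) else 0)"
proof -
  assume i: "i \<in> H"
  have "(\<lambda>k. c i j k) = vsc (wt c j (ub i)) (ub j)"
    using wt_vec[OF ub_H[OF i], of j] by (simp only: brk_ub_ub)
  then have "c i j k = vsc (wt c j (ub i)) (ub j) k" by metis
  then show ?thesis by (simp add: vsc_def ub_def[of j])
qed

lemma wt_add_basis:
  assumes i: "i \<in> H" and cjl: "c j l k \<noteq> 0"
  shows "wt c k (ub i) = wt c j (ub i) + wt c l (ub i)"
proof -
  have ps: "psign (p i \<and> p j) = 1" using H_ev_i[OF i] by (simp add: psign_def)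
  have "(\<Sum>n\<in>UNIV. c j l n * c i n k) = c j l k * wt c k (ub i)"
    using cH[OF i] by (simp cong: if_cong)
  moreover have "(\<Sum>n\<in>UNIV. c i j n * c n l k) = wt c j (ub i) * c j l k"
    using cH[OF i] by (simp cong: if_cong)
  moreover have "(\<Sum>n\<in>UNIV. c i l n * c j n k) = wt c l (ub i) * c j l k"
    using cH[OF i] by (simp cong: if_cong)
  ultimately have "c j l k * wt c k (ub i) = wt c j (ub i) * c j l k + wt c l (ub i) * c j l k"
    using jac[of j l i k] ps by simp
  then have "c j l k * (wt c k (ub i) - wt c j (ub i) - wt c l (ub i)) = 0"
    by (simp add: algebra_simps)
  then have "wt c k (ub i) - wt c j (ub i) = wt c l (ub i)" using cjl by simp
  then show ?thesis by (metis diff_eq_eq add.commute)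
qed

lemma wt_add: "h \<in> supp_on H \<Longrightarrow> c j l k \<noteq> 0 \<Longrightarrow> wt c k h = wt c j h + wt c l h"
proof -
  assume h: "h \<in> supp_on H" and cjl: "c j l k \<noteq> 0"
  have "wt c k h = (\<Sum>i\<in>H. h i * wt c j (ub i) + h i * wt c l (ub i))"
    unfolding wt_lin[OF h] by (rule sum.cong) (simp_all add: wt_add_basis[OF _ cjl] algebra_simps)
  also have "\<dots> = wt c j h + wt c l h"
    unfolding sum.distrib wt_lin[OF h, of j] wt_lin[OF h, of l] ..
  finally show ?thesis .
qed

lemma wt_x: "wt c i x = of_real (m i)"
  using grading by (simp add: wt_def vsc_def ub_def)

lemma grade_add: "c j l k \<noteq> 0 \<Longrightarrow> m k = m j + m l"
  using wt_add[OF x_H] by (simp add: wt_x) (metis of_real_add of_real_eq_iff)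

end


context ctx begin

abbreviation eps :: "'i \<Rightarrow> complex" where "eps i \<equiv> cis (2 * pi * mu i)"
abbreviation th :: "'i vec \<Rightarrow> complex" where "th h \<equiv> 2 * frm B x h"

lemma B_wt_basis:
  assumes i0: "i0 \<in> H" and Bij: "B i j \<noteq> 0"
  shows "wt c i (ub i0) + wt c j (ub i0) = 0"
proof -
  have psi: "psign (p i \<and> p i0) = 1" using H_ev_i[OF i0] by (simp add: psign_def)
  have cii: "c i i0 k = - (if k = i then wt c i (ub i0) else 0)" for k
    using c_antisym[of i i0 k] psi cH[OF i0, of i k] by simp
  have "frm B (brk c (ub i) (ub i0)) (ub j) = - wt c i (ub i0) * B i j"
    unfolding brk_ub_ub frm_ub_right cii by (simp add: sum_negf)
  moreover have "frm B (ub i) (brk c (ub i0) (ub j)) = wt c j (ub i0) * B i j"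
    unfolding brk_ub_ub frm_ub_left using cH[OF i0] by simp
  ultimately have "(wt c i (ub i0) + wt c j (ub i0)) * B i j = 0"
    using finv[of "ub i" "ub i0" "ub j"] by (simp add: algebra_simps)
  then show ?thesis using Bij by simp
qed

lemma B_wt: "h \<in> supp_on H \<Longrightarrow> B i j \<noteq> 0 \<Longrightarrow> wt c i h + wt c j h = 0"
proof -
  assume h: "h \<in> supp_on H" and Bij: "B i j \<noteq> 0"
  have "wt c i h + wt c j h = (\<Sum>i0\<in>H. h i0 * (wt c i (ub i0) + wt c j (ub i0)))"
    unfolding wt_lin[OF h, of i] wt_lin[OF h, of j] sum.distrib[symmetric] by (simp add: algebra_simps)
  also have "\<dots> = 0" by (rule sum.neutral) (simp add: B_wt_basis[OF _ Bij])
  finally show ?thesis .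
qed

lemma B_m: "B i j \<noteq> 0 \<Longrightarrow> m i + m j = 0"
  using B_wt[OF x_H] by (simp add: wt_x) (metis of_real_add of_real_eq_0_iff)

lemma sig_ub: "sig mu (ub i) = vsc (eps i) (ub i)"
  by (simp add: sig_def vsc_def ub_def fun_eq_iff)

lemma eps_c: "c i j k \<noteq> 0 \<Longrightarrow> eps k = eps i * eps j"
proof -
  assume cijk: "c i j k \<noteq> 0"
  have "sig mu (brk c (ub i) (ub j)) k = brk c (sig mu (ub i)) (sig mu (ub j)) k"
    using sig_aut by simp
  then have "eps k * c i j k = eps i * eps j * c i j k"
    unfolding sig_ub brk_bil by (simp add: brk_ub_ub sig_def vsc_def mult.commute)
  then show ?thesis using cijk by (simp add: mult.commute)
qed

lemma eps_B: "B i j \<noteq> 0 \<Longrightarrow> eps i * eps j = 1"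
proof -
  assume Bij: "B i j \<noteq> 0"
  have "frm B (sig mu (ub i)) (sig mu (ub j)) = frm B (ub i) (ub j)"
    using sig_form by simp
  then have "eps i * eps j * B i j = B i j"
    unfolding sig_ub frm_bil frm_ub_ub by (simp add: algebra_simps)
  then show ?thesis using Bij by simp
qed

lemma eps_unit: "eps i * cnj (eps i) = 1"
  by (simp add: cis_cnj cis_mult)

lemma eps_nz: "eps i \<noteq> 0" by simp

lemma eps_inv: "eps i * eps j = 1 \<Longrightarrow> eps j = cnj (eps i)"
proof -
  assume h: "eps i * eps j = 1"
  have "eps j = eps j * (eps i * cnj (eps i))" using eps_unit[of i] by simp
  also have "\<dots> = (eps i * eps j) * cnj (eps i)" by (simp only: mult_ac)
  also have "\<dots> = cnj (eps i)" using h by simp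
  finally show ?thesis .
qed

lemma cis_half: "cis (pi * (2 * (1/2::real))) = -1" "cis (pi * (2 * (-1/2::real))) = -1"
  by (simp_all add: cis.code complex_eq_iff)

lemma x_nz: "x \<noteq> vzero"
  using theta_norm frm_zero(1)[of B x] by auto

lemma f_nz: "f \<noteq> vzero"
  using sl2(3) x_nz brk_zero(2)[of c e] by auto

lemma e_nz: "e \<noteq> vzero" using ef_even(3) .

definition jf where "jf = (SOME j. {i. m i = -1} = {j} \<and> f = vsc (f j) (ub j) \<and> f j \<noteq> 0)"
definition ie where "ie = (SOME j. {i. m i = 1} = {j} \<and> e = vsc (e j) (ub j) \<and> e j \<noteq> 0)"

lemma jf_props: "{i. m i = -1} = {jf}" "f = vsc (f jf) (ub jf)" "f jf \<noteq> 0"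
proof -
  have "\<exists>j. {i. m i = -1} = {j} \<and> f = vsc (f j) (ub j) \<and> f j \<noteq> 0"
    using one_dim[OF gm1 f_nz] .
  then have "{i. m i = -1} = {jf} \<and> f = vsc (f jf) (ub jf) \<and> f jf \<noteq> 0"
    unfolding jf_def by (rule someI_ex)
  then show "{i. m i = -1} = {jf}" "f = vsc (f jf) (ub jf)" "f jf \<noteq> 0" by auto
qed

lemma ie_props: "{i. m i = 1} = {ie}" "e = vsc (e ie) (ub ie)" "e ie \<noteq> 0"
proof -
  have "\<exists>j. {i. m i = 1} = {j} \<and> e = vsc (e j) (ub j) \<and> e j \<noteq> 0"
    using one_dim[OF g1 e_nz] .
  then have "{i. m i = 1} = {ie} \<and> e = vsc (e ie) (ub ie) \<and> e ie \<noteq> 0"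
    unfolding ie_def by (rule someI_ex)
  then show "{i. m i = 1} = {ie}" "e = vsc (e ie) (ub ie)" "e ie \<noteq> 0" by auto
qed

lemma m_jf: "m jf = -1" and m_ie: "m ie = 1"
  using jf_props(1) ie_props(1) by auto

lemma m_eq_m1: "m i = -1 \<longleftrightarrow> i = jf" using jf_props(1) by auto
lemma m_eq_1: "m i = 1 \<longleftrightarrow> i = ie" using ie_props(1) by auto

lemma p_jf: "\<not> p jf" using ef_even(2) jf_props(3) by (auto simp: supp_on_def)
lemma p_ie: "\<not> p ie" using ef_even(1) ie_props(3) by (auto simp: supp_on_def)

lemma jf_Np: "jf \<in> Np" using f_plus jf_props(3) by (auto simp: supp_on_def)

lemma eps_jf: "eps jf = 1"
proof -
  have "sig mu f jf = f jf" using sig_f by simp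
  then show ?thesis using jf_props(3) by (simp add: sig_def)
qed

lemma wt_jf: "h \<in> supp_on H \<Longrightarrow> wt c jf h = - th h"
proof -
  assume h: "h \<in> supp_on H"
  have "brk c h f = vsc (- (2 * frm B x h)) f" using roots(2) h H_sub by auto
  then have "brk c h f jf = vsc (- (2 * frm B x h)) f jf" by simp
  also have "brk c h f = vsc (f jf) (vsc (wt c jf h) (ub jf))"
    by (subst jf_props(2)) (simp add: brk_bil wt_vec[OF h])
  finally have "f jf * wt c jf h = - (2 * frm B x h) * f jf"
    by (simp add: vsc_def ub_def)
  then have "f jf * (wt c jf h + th h) = 0" by (simp add: algebra_simps)
  then show ?thesis using jf_props(3) by (simp add: eq_neg_iff_add_eq_0)
qed

lemma wt_ie: "h \<in> supp_on H \<Longrightarrow> wt c ie h = th h"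
proof -
  assume h: "h \<in> supp_on H"
  have "brk c h e = vsc (2 * frm B x h) e" using roots(1) h H_sub by auto
  then have "brk c h e ie = vsc (2 * frm B x h) e ie" by simp
  also have "brk c h e = vsc (e ie) (vsc (wt c ie h) (ub ie))"
    by (subst ie_props(2)) (simp add: brk_bil wt_vec[OF h])
  finally have "e ie * wt c ie h = (2 * frm B x h) * e ie"
    by (simp add: vsc_def ub_def)
  then have "e ie * (wt c ie h - th h) = 0" by (simp add: algebra_simps)
  then show ?thesis using ie_props(3) by simp
qed

lemma x_eq: "x = vsc (e ie * f jf) (\<lambda>k. c ie jf k)"
proof -
  have "x = brk c e f" using sl2(3) by simp
  also have "\<dots> = brk c (vsc (e ie) (ub ie)) (vsc (f jf) (ub jf))"
    using ie_props(2) jf_props(2) by simp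
  also have "\<dots> = vsc (e ie * f jf) (\<lambda>k. c ie jf k)"
    by (simp only: brk_bil brk_ub_ub) (simp add: vsc_def mult_ac)
  finally show ?thesis .
qed

lemma eps_ie: "eps ie = 1"
proof -
  obtain k where k: "x k \<noteq> 0" using x_nz by (auto simp: vzero_def fun_eq_iff)
  then have ck: "c ie jf k \<noteq> 0" using x_eq by (metis mult_zero_right vsc_def)
  have "sig mu x k = x k" using sig_x by simp
  then have "eps k = 1" using k by (simp add: sig_def)
  then show ?thesis using eps_c[OF ck] eps_jf by simp
qed

lemma ie_notNp: "ie \<notin> Np"
proof
  assume ie: "ie \<in> Np"
  have ek: "k \<noteq> ie \<Longrightarrow> e k = 0" for k
    using fun_cong[OF ie_props(2), of k] by (simp add: vsc_def ub_def)
  have "e \<in> supp_on Np" unfolding supp_on_def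
  proof (intro CollectI allI impI)
    fix k assume "k \<notin> Np"
    then have "k \<noteq> ie" using ie by blast
    then show "e k = 0" by (rule ek)
  qed
  moreover have "f \<in> supp_on Np" by (rule f_plus)
  ultimately have "brk c e f \<in> supp_on Np" using nplus(1) by (simp add: subalg_def)
  then have xN: "x \<in> supp_on Np" using sl2(3) by simp
  have "x = vzero"
    using xN x_H disj(1) by (auto simp: supp_on_def vzero_def fun_eq_iff)
  then show False using x_nz by simp
qed

lemma sval_char:
  assumes "i \<notin> Np" "n = mu i + of_int k" "- m i < n" "n \<le> - m i + 1"
  shows "sval Np m mu i = n"
proof -
  have "(LEAST n::real. (\<exists>k::int. n = mu i + of_int k) \<and> n > - m i) = n"
  proof (rule Least_equality)
    show "(\<exists>k::int. n = mu i + of_int k) \<and> n > - m i" using assms by auto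
  next
    fix y assume "(\<exists>k::int. y = mu i + of_int k) \<and> y > - m i"
    then obtain k' :: int where y: "y = mu i + of_int k'" "y > - m i" by auto
    have "of_int k' > of_int k - (1::real)" using y assms by linarith
    then have "k' \<ge> k" by linarith
    then show "n \<le> y" using y assms by simp
  qed
  then show ?thesis using assms(1) by (simp add: sval_def)
qed

lemma sval_range:
  assumes "i \<notin> Np"
  shows "- m i < sval Np m mu i \<and> sval Np m mu i \<le> - m i + 1 \<and> (\<exists>k::int. sval Np m mu i = mu i + of_int k)"
proof -
  define k where "k = \<lfloor>- m i - mu i\<rfloor> + 1"
  have a: "- m i < mu i + of_int k" unfolding k_def by linarith
  have b: "mu i + of_int k \<le> - m i + 1" unfolding k_def by linarith
  have "sval Np m mu i = mu i + of_int k" using sval_char[OF assms refl a b] .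
  then show ?thesis using a b by auto
qed

lemma sval_Np: "i \<in> Np \<Longrightarrow> sval Np m mu i = - m i"
  by (simp add: sval_def)

lemma mu_of_eps:
  assumes "eps i = cis (2*pi*a)"
  shows "\<exists>z::int. mu i = a + of_int z"
  using cis_eq_int assms by blast

lemma s_jf: "sval Np m mu jf = 1"
  using sval_Np[OF jf_Np] m_jf by simp

lemma s_ie: "sval Np m mu ie = 0"
proof -
  obtain z :: int where z: "mu ie = 0 + of_int z" using mu_of_eps[of ie 0] eps_ie by auto
  show ?thesis by (rule sval_char[OF ie_notNp, of _ "-z"]) (use z m_ie in auto)
qed

lemma s_shift:
  assumes "i \<notin> Np" "k \<notin> Np" "m i = 1/2" "m k = -1/2" "eps i = eps k"
  shows "sval Np m mu k = sval Np m mu i + 1"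
proof -
  obtain z :: int where z: "mu k = mu i + of_int z" using mu_of_eps[of k "mu i"] assms(5) by auto
  obtain z' :: int where z': "sval Np m mu i = mu i + of_int z'" using sval_range[OF assms(1)] by auto
  have r: "- m i < sval Np m mu i" "sval Np m mu i \<le> - m i + 1" using sval_range[OF assms(1)] by auto
  show ?thesis
    by (rule sval_char[OF assms(2), of _ "z' + 1 - z"]) (use z z' r assms(3,4) in auto)
qed

lemma s_neg:
  assumes "i \<notin> Np" "j \<notin> Np" "m i = 1/2" "m j = 1/2" "eps j = cnj (eps i)" "eps i \<noteq> -1"
  shows "sval Np m mu j = - sval Np m mu i"
proof -
  have "eps j = cis (2*pi*(- mu i))" using assms(5) by (simp add: cis_cnj)
  then obtain z :: int where z: "mu j = - mu i + of_int z" using mu_of_eps by blast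
  obtain z' :: int where z': "sval Np m mu i = mu i + of_int z'" using sval_range[OF assms(1)] by auto
  have r: "- m i < sval Np m mu i" "sval Np m mu i \<le> - m i + 1" using sval_range[OF assms(1)] by auto
  have ne: "sval Np m mu i \<noteq> 1/2"
  proof
    assume "sval Np m mu i = 1/2"
    then have hmu: "mu i = 1/2 + of_int (- z')" using z' by simp
    have m2: "2*pi*mu i = 2*pi*(1/2) + 2*pi*of_int (-z')" unfolding hmu by (simp add: algebra_simps)
    have "eps i = cis (2*pi*(1/2) + 2*pi*of_int (-z'))" by (subst m2) (rule refl)
    also have "\<dots> = cis (2*pi*(1/2)) * cis (2*pi*of_int (-z'))" by (rule cis_mult[symmetric])
    also have "cis (2*pi*of_int (-z')) = 1" by (rule cis_multiple_2pi) simp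
    also have "cis (2*pi*(1/2)) = -1" by (simp add: cis.code complex_eq_iff)
    finally show False using assms(6) by simp
  qed
  show ?thesis
    by (rule sval_char[OF assms(2), of _ "- z - z'"]) (use z z' r ne assms(3,4) in auto)
qed

lemma s_sig_p: "i \<notin> Np \<Longrightarrow> m i = 1/2 \<Longrightarrow> eps i = -1 \<Longrightarrow> sval Np m mu i = 1/2"
proof -
  assume a: "i \<notin> Np" "m i = 1/2" "eps i = -1"
  have "eps i = cis (2*pi*(1/2))" using a by simp
  then obtain z :: int where z: "mu i = 1/2 + of_int z" using mu_of_eps by blast
  show ?thesis by (rule sval_char[OF a(1), of _ "-z"]) (use z a in auto)
qed

lemma s_sig_m: "i \<notin> Np \<Longrightarrow> m i = -1/2 \<Longrightarrow> eps i = -1 \<Longrightarrow> sval Np m mu i = 3/2"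
proof -
  assume a: "i \<notin> Np" "m i = -1/2" "eps i = -1"
  have "eps i = cis (2*pi*(1/2))" using a by simp
  then obtain z :: int where z: "mu i = 1/2 + of_int z" using mu_of_eps by blast
  show ?thesis by (rule sval_char[OF a(1), of _ "1-z"]) (use z a in auto)
qed

end


lemma frm_lin_right:
  "frm B a (\<lambda>k. \<Sum>i\<in>UNIV. g i * w i k) = (\<Sum>i\<in>UNIV. g i * frm B a (w i))"
  for B :: "'i::finite \<Rightarrow> 'i \<Rightarrow> complex"
proof -
  have "frm B a (\<lambda>k. \<Sum>i\<in>UNIV. g i * w i k) = (\<Sum>b\<in>UNIV. (\<Sum>i\<in>UNIV. g i * w i b) * frm B a (ub b))"
    by (subst frm_expand_right) simp
  also have "\<dots> = (\<Sum>i\<in>UNIV. g i * (\<Sum>b\<in>UNIV. w i b * frm B a (ub b)))"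
    by (simp add: sum_distrib_left sum_distrib_right mult_ac) (rule sum.swap)
  also have "\<dots> = (\<Sum>i\<in>UNIV. g i * frm B a (w i))"
    by (simp add: frm_expand_right[symmetric])
  finally show ?thesis .
qed

lemma brk_ub_ub_v: "brk c (ub a) (brk c (ub b) v) k = (\<Sum>l\<in>UNIV. v l * (\<Sum>n\<in>UNIV. c b l n * c a n k))"
  unfolding brk_ub_left by (simp add: sum_distrib_left sum_distrib_right mult_ac) (rule sum.swap)

context ctx begin

lemma m_vals: "m i = -1 \<or> m i = -1/2 \<or> m i = 0 \<or> m i = 1/2 \<or> m i = 1"
  using grading_vals by auto

lemma c_props: "c i j k \<noteq> 0 \<Longrightarrow> p k = (p i \<noteq> p j) \<and> eps k = eps i * eps j \<and> m k = m i + m j \<and>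
   (\<forall>h\<in>supp_on H. wt c k h = wt c i h + wt c j h)"
  using par eps_c grade_add wt_add by blast

lemma B_props: "B i j \<noteq> 0 \<Longrightarrow> p i = p j \<and> eps i * eps j = 1 \<and> m i + m j = 0 \<and>
   (\<forall>h\<in>supp_on H. wt c i h + wt c j h = 0)"
  using Bpar eps_B B_m B_wt by blast

lemma c_zero_grade: "m i + m j \<noteq> -1 \<Longrightarrow> m i + m j \<noteq> -1/2 \<Longrightarrow> m i + m j \<noteq> 0 \<Longrightarrow>
   m i + m j \<noteq> 1/2 \<Longrightarrow> m i + m j \<noteq> 1 \<Longrightarrow> c i j k = 0"
  using grade_add m_vals by metis

lemma brk_e_half: "brk c e v = vsc (e ie) (brk c (ub ie) v)"
  by (subst ie_props(2)) (simp add: brk_bil)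
lemma brk_f_half: "brk c f v = vsc (f jf) (brk c (ub jf) v)"
  by (subst jf_props(2)) (simp add: brk_bil)

lemma xc: "e ie * f jf * (\<Sum>n\<in>UNIV. c ie jf n * c n l k) = (if k = l then of_real (m l) else 0)"
proof -
  have xn: "x n = e ie * f jf * c ie jf n" for n using fun_cong[OF x_eq, of n] by (simp add: vsc_def)
  have "e ie * f jf * (\<Sum>n\<in>UNIV. c ie jf n * c n l k) = (\<Sum>n\<in>UNIV. x n * c n l k)"
    by (simp add: sum_distrib_left xn mult_ac)
  also have "\<dots> = brk c x (ub l) k" by (simp add: brk_ub_right)
  also have "\<dots> = vsc (of_real (m l)) (ub l) k" using grading by simp
  also have "\<dots> = (if k = l then of_real (m l) else 0)" by (simp add: vsc_def ub_def)
  finally show ?thesis .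
qed

lemma ef_half:
  assumes v: "v \<in> supp_on {i. m i = 1/2}"
  shows "brk c e (brk c f v) = vsc (1/2) v"
proof
  fix k
  have ps: "psign (p ie \<and> p jf) = 1" using p_ie by (simp add: psign_def)
  have J: "(\<Sum>n\<in>UNIV. c jf l n * c ie n k) = (\<Sum>n\<in>UNIV. c ie jf n * c n l k)" if "m l = 1/2" for l
  proof -
    have "c ie l n = 0" for n using c_zero_grade[of ie l] that m_ie by simp
    then show ?thesis using jac[of jf l ie k] ps by simp
  qed
  have "brk c e (brk c f v) k = e ie * f jf * (\<Sum>l\<in>UNIV. v l * (\<Sum>n\<in>UNIV. c jf l n * c ie n k))"
    unfolding brk_e_half brk_f_half brk_bil by (simp add: vsc_def brk_ub_ub_v)
  also have "\<dots> = (\<Sum>l\<in>UNIV. v l * (e ie * f jf * (\<Sum>n\<in>UNIV. c ie jf n * c n l k)))"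
    unfolding sum_distrib_left[of "e ie * f jf" "\<lambda>l. v l * (\<Sum>n\<in>UNIV. c jf l n * c ie n k)"]
  proof (rule sum.cong)
    fix l
    show "e ie * f jf * (v l * (\<Sum>n\<in>UNIV. c jf l n * c ie n k)) =
          v l * (e ie * f jf * (\<Sum>n\<in>UNIV. c ie jf n * c n l k))"
    proof (cases "v l = 0")
      case False
      then have "m l = 1/2" using v by (auto simp: supp_on_def)
      then show ?thesis using J by (simp add: mult_ac)
    qed simp
  qed simp
  also have "\<dots> = v k * of_real (m k)" unfolding xc by simp
  also have "\<dots> = vsc (1/2) v k"
  proof (cases "v k = 0")
    case False
    then have "m k = 1/2" using v by (auto simp: supp_on_def)
    then have mk: "complex_of_real (m k) = 1/2" by (subst \<open>m k = 1/2\<close>) simp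
    show ?thesis by (simp add: vsc_def mk)
  qed (simp add: vsc_def)
  finally show "brk c e (brk c f v) k = vsc (1/2) v k" .
qed

lemma fe_half:
  assumes v: "v \<in> supp_on {i. m i = -1/2}"
  shows "brk c f (brk c e v) = vsc (1/2) v"
proof
  fix k
  have ps: "psign (p jf \<and> p ie) = 1" using p_jf by (simp add: psign_def)
  have J: "(\<Sum>n\<in>UNIV. c ie l n * c jf n k) = - (\<Sum>n\<in>UNIV. c ie jf n * c n l k)" if "m l = -1/2" for l
  proof -
    have "c jf l n = 0" for n using c_zero_grade[of jf l] that m_jf by simp
    moreover have "c jf ie n = - c ie jf n" for n using c_antisym[of jf ie n] ps by simp
    ultimately show ?thesis using jac[of ie l jf k] ps by (simp add: sum_negf)
  qed
  have "brk c f (brk c e v) k = e ie * f jf * (\<Sum>l\<in>UNIV. v l * (\<Sum>n\<in>UNIV. c ie l n * c jf n k))"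
    unfolding brk_e_half brk_f_half brk_bil by (simp add: vsc_def brk_ub_ub_v mult_ac)
  also have "\<dots> = (\<Sum>l\<in>UNIV. v l * (- (e ie * f jf * (\<Sum>n\<in>UNIV. c ie jf n * c n l k))))"
    unfolding sum_distrib_left[of "e ie * f jf" "\<lambda>l. v l * (\<Sum>n\<in>UNIV. c ie l n * c jf n k)"]
  proof (rule sum.cong)
    fix l
    show "e ie * f jf * (v l * (\<Sum>n\<in>UNIV. c ie l n * c jf n k)) =
          v l * (- (e ie * f jf * (\<Sum>n\<in>UNIV. c ie jf n * c n l k)))"
    proof (cases "v l = 0")
      case False
      then have "m l = -1/2" using v by (auto simp: supp_on_def)
      then show ?thesis using J by (simp add: mult_ac)
    qed simp
  qed simp
  also have "\<dots> = - v k * of_real (m k)" unfolding xc by (simp add: sum_negf)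
  also have "\<dots> = vsc (1/2) v k"
  proof (cases "v k = 0")
    case False
    then have "m k = -1/2" using v by (auto simp: supp_on_def)
    then have mk: "complex_of_real (m k) = -1/2" by (subst \<open>m k = -1/2\<close>) simp
    show ?thesis by (simp add: vsc_def mk)
  qed (simp add: vsc_def)
  finally show "brk c f (brk c e v) k = vsc (1/2) v k" .
qed

end


context ctx begin

definition om where "om i j = frm B f (brk c (ub i) (ub j))"

lemma Om_left: "frm B f (brk c a b) = (\<Sum>k\<in>UNIV. a k * frm B f (brk c (ub k) b))"
proof -
  have "brk c a b = (\<lambda>k'. \<Sum>k\<in>UNIV. a k * brk c (ub k) b k')"
    using brk_expand_left[of c a b] by blast
  then show ?thesis by (simp add: frm_lin_right)
qed

lemma Om_right: "frm B f (brk c a b) = (\<Sum>k\<in>UNIV. b k * frm B f (brk c a (ub k)))"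
proof -
  have "brk c a b = (\<lambda>k'. \<Sum>k\<in>UNIV. b k * brk c a (ub k) k')"
    using brk_expand_right[of c a b] by blast
  then show ?thesis by (simp add: frm_lin_right)
qed

lemma Om_bil:
  "frm B f (brk c (vadd a b) d) = frm B f (brk c a d) + frm B f (brk c b d)"
  "frm B f (brk c (vsc t a) d) = t * frm B f (brk c a d)"
  "frm B f (brk c d (vadd a b)) = frm B f (brk c d a) + frm B f (brk c d b)"
  "frm B f (brk c d (vsc t a)) = t * frm B f (brk c d a)"
  by (simp_all add: brk_bil frm_bil)

lemma om_eq: "om i j = f jf * (\<Sum>k\<in>UNIV. c i j k * B jf k)"
proof -
  have "om i j = frm B (vsc (f jf) (ub jf)) (\<lambda>k. c i j k)"
    unfolding om_def brk_ub_ub by (subst jf_props(2)[symmetric]) (rule refl)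
  then show ?thesis by (simp add: frm_bil frm_ub_left)
qed

lemma om_props:
  assumes "om i j \<noteq> 0"
  shows "m i + m j = 1 \<and> p i = p j \<and> eps i * eps j = 1 \<and> (\<forall>h\<in>supp_on H. wt c i h + wt c j h = th h)"
proof -
  have "(\<Sum>k\<in>UNIV. c i j k * B jf k) \<noteq> 0" using assms om_eq by auto
  then obtain k where "c i j k * B jf k \<noteq> 0" by (rule sum.not_neutral_contains_not_neutral)
  then have k: "c i j k \<noteq> 0" "B jf k \<noteq> 0" by auto
  note C = c_props[OF k(1)] and BB = B_props[OF k(2)]
  have "m k = 1" using BB m_jf by simp
  moreover have "\<not> p k" using BB p_jf by simp
  moreover have "eps k = 1" using BB eps_jf by simp
  moreover have "\<forall>h\<in>supp_on H. wt c k h = th h" using BB wt_jf by (simp add: eq_neg_iff_add_eq_0[symmetric])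
  ultimately show ?thesis using C by auto
qed

lemma om_anti: "om i j = - psign (p i \<and> p j) * om j i"
proof -
  have "(\<lambda>k. c i j k) = vsc (- psign (p i \<and> p j)) (\<lambda>k. c j i k)"
    unfolding vsc_def using c_antisym by blast
  then show ?thesis unfolding om_def brk_ub_ub by (simp add: frm_bil)
qed

lemma om_nondeg:
  assumes v: "v \<in> supp_on {i. m i = 1/2}" and h: "\<And>j. frm B f (brk c v (ub j)) = 0"
  shows "v = vzero"
proof -
  have "frm B (brk c f v) (ub j) = 0" for j using h finv by simp
  then have "frm B (brk c f v) b = 0" for b by (subst frm_expand_right) simp
  then have "brk c f v = vzero" using fnd by blast
  then have "vsc (1/2) v = vzero" using ef_half[OF v] brk_zero by metis
  then show ?thesis by (auto simp: vsc_def vzero_def fun_eq_iff)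
qed

lemma supp_sub: "v \<in> supp_on I \<Longrightarrow> I \<subseteq> J \<Longrightarrow> v \<in> supp_on J"
  by (auto simp: supp_on_def)

lemma cnt_f:
  assumes R: "\<And>i k. m i = 1/2 \<Longrightarrow> R i \<Longrightarrow> c jf i k \<noteq> 0 \<Longrightarrow> R' k"
  shows "card {i. m i = 1/2 \<and> R i} \<le> card {k. m k = -1/2 \<and> R' k}"
proof (rule card_le_of_inj[where M = "\<lambda>i k. c jf i k"])
  fix v assume v: "v \<in> supp_on {i. m i = 1/2 \<and> R i}"
    and hv: "\<forall>k\<in>{k. m k = -1/2 \<and> R' k}. (\<Sum>i\<in>{i. m i = 1/2 \<and> R i}. v i * c jf i k) = 0"
  have "brk c f v k = 0" for k
  proof -
    have "brk c f v k = f jf * (\<Sum>i\<in>{i. m i = 1/2 \<and> R i}. v i * c jf i k)"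
      unfolding brk_f_half by (simp add: vsc_def brk_ub_left supp_sum[OF v])
    also have "(\<Sum>i\<in>{i. m i = 1/2 \<and> R i}. v i * c jf i k) = 0"
    proof (cases "m k = -1/2 \<and> R' k")
      case True then show ?thesis using hv by simp
    next
      case False
      show ?thesis
      proof (rule sum.neutral, intro ballI)
        fix i assume i: "i \<in> {i. m i = 1/2 \<and> R i}"
        have "c jf i k = 0"
        proof (rule ccontr)
          assume ne: "c jf i k \<noteq> 0"
          then have "m k = -1/2" using grade_add[OF ne] m_jf i by simp
          moreover have "R' k" using R ne i by auto
          ultimately show False using False by simp
        qed
        then show "v i * c jf i k = 0" by simp
      qed
    qed
    finally show ?thesis by simp
  qed
  then have "brk c f v = vzero" by (simp add: vzero_def fun_eq_iff)
  moreover have "v \<in> supp_on {i. m i = 1/2}" using v by (rule supp_sub) auto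
  ultimately have "vsc (1/2) v = vzero" using ef_half brk_zero by metis
  then show "v = vzero" by (auto simp: vsc_def vzero_def fun_eq_iff)
qed simp

lemma cnt_e:
  assumes R: "\<And>k i. m k = -1/2 \<Longrightarrow> R' k \<Longrightarrow> c ie k i \<noteq> 0 \<Longrightarrow> R i"
  shows "card {k. m k = -1/2 \<and> R' k} \<le> card {i. m i = 1/2 \<and> R i}"
proof (rule card_le_of_inj[where M = "\<lambda>k i. c ie k i"])
  fix v assume v: "v \<in> supp_on {k. m k = -1/2 \<and> R' k}"
    and hv: "\<forall>i\<in>{i. m i = 1/2 \<and> R i}. (\<Sum>k\<in>{k. m k = -1/2 \<and> R' k}. v k * c ie k i) = 0"
  have "brk c e v i = 0" for i
  proof -
    have "brk c e v i = e ie * (\<Sum>k\<in>{k. m k = -1/2 \<and> R' k}. v k * c ie k i)"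
      unfolding brk_e_half by (simp add: vsc_def brk_ub_left supp_sum[OF v])
    also have "(\<Sum>k\<in>{k. m k = -1/2 \<and> R' k}. v k * c ie k i) = 0"
    proof (cases "m i = 1/2 \<and> R i")
      case True then show ?thesis using hv by simp
    next
      case False
      show ?thesis
      proof (rule sum.neutral, intro ballI)
        fix k assume k: "k \<in> {k. m k = -1/2 \<and> R' k}"
        have "c ie k i = 0"
        proof (rule ccontr)
          assume ne: "c ie k i \<noteq> 0"
          then have "m i = 1/2" using grade_add[OF ne] m_ie k by simp
          moreover have "R i" using R ne k by auto
          ultimately show False using False by simp
        qed
        then show "v k * c ie k i = 0" by simp
      qed
    qed
    finally show ?thesis by simp
  qed
  then have "brk c e v = vzero" by (simp add: vzero_def fun_eq_iff)
  moreover have "v \<in> supp_on {i. m i = -1/2}" using v by (rule supp_sub) auto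
  ultimately have "vsc (1/2) v = vzero" using fe_half brk_zero by metis
  then show "v = vzero" by (auto simp: vsc_def vzero_def fun_eq_iff)
qed simp

lemma Om_ub_supp: "v \<in> supp_on I \<Longrightarrow> frm B f (brk c v (ub j)) = (\<Sum>k\<in>I. v k * om k j)"
  unfolding om_def by (subst Om_left) (rule supp_sum)

lemma cnt_om:
  assumes R: "\<And>i j. m i = 1/2 \<Longrightarrow> R i \<Longrightarrow> om i j \<noteq> 0 \<Longrightarrow> R' j"
  shows "card {i. m i = 1/2 \<and> R i} \<le> card {j. m j = 1/2 \<and> R' j}"
proof (rule card_le_of_inj[where M = "\<lambda>i j. om i j"])
  fix v assume v: "v \<in> supp_on {i. m i = 1/2 \<and> R i}"
    and hv: "\<forall>j\<in>{j. m j = 1/2 \<and> R' j}. (\<Sum>i\<in>{i. m i = 1/2 \<and> R i}. v i * om i j) = 0"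
  have "frm B f (brk c v (ub j)) = 0" for j
  proof -
    have "frm B f (brk c v (ub j)) = (\<Sum>i\<in>{i. m i = 1/2 \<and> R i}. v i * om i j)"
      by (rule Om_ub_supp[OF v])
    also have "\<dots> = 0"
    proof (cases "m j = 1/2 \<and> R' j")
      case True then show ?thesis using hv by simp
    next
      case False
      show ?thesis
      proof (rule sum.neutral, intro ballI)
        fix i assume i: "i \<in> {i. m i = 1/2 \<and> R i}"
        have "om i j = 0"
        proof (rule ccontr)
          assume ne: "om i j \<noteq> 0"
          then have "m j = 1/2" using om_props[OF ne] i by simp
          moreover have "R' j" using R ne i by auto
          ultimately show False using False by simp
        qed
        then show "v i * om i j = 0" by simp
      qed
    qed
    finally show ?thesis .
  qed
  moreover have "v \<in> supp_on {i. m i = 1/2}" using v by (rule supp_sub) auto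
  ultimately show "v = vzero" using om_nondeg by blast
qed simp

lemma gsig: "i \<in> Np \<union> H \<union> Nm \<longleftrightarrow> eps i = cis (pi * (2 * m i))"
  using decomp by blast

lemma eps_half_iff: assumes "m i = 1/2 \<or> m i = -1/2" shows "cis (pi * (2 * m i)) = -1"
  using assms
proof
  assume h: "m i = 1/2" show ?thesis unfolding h by (rule cis_half(1))
next
  assume h: "m i = -1/2" show ?thesis unfolding h by (rule cis_half(2))
qed

lemma cnt_B:
  assumes iso: "\<forall>a\<in>supp_on X. \<forall>b\<in>supp_on X. frm B a b = 0"
    and XN: "X \<subseteq> Np \<union> Nm" and cov: "Np \<union> Nm \<subseteq> X \<union> Y"
    and g: "g = 1/2 \<or> g = -1/2"
    and R: "\<And>i j. i \<in> X \<Longrightarrow> R i \<Longrightarrow> B i j \<noteq> 0 \<Longrightarrow> R' j"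
  shows "card {i\<in>X. m i = g \<and> R i} \<le> card {j\<in>Y. m j = - g \<and> R' j}"
proof (rule card_le_of_inj[where M = "\<lambda>i j. B i j"])
  fix v assume v: "v \<in> supp_on {i\<in>X. m i = g \<and> R i}"
    and hv: "\<forall>j\<in>{j\<in>Y. m j = - g \<and> R' j}. (\<Sum>i\<in>{i\<in>X. m i = g \<and> R i}. v i * B i j) = 0"
  have vX: "v \<in> supp_on X" using v by (rule supp_sub) auto
  have "frm B v (ub j) = 0" for j
  proof (cases "j \<in> X")
    case True
    have "ub j \<in> supp_on X" using True by (auto simp: supp_on_def ub_def)
    then show ?thesis using iso vX by blast
  next
    case False
    have "frm B v (ub j) = (\<Sum>i\<in>{i\<in>X. m i = g \<and> R i}. v i * B i j)"
      unfolding frm_ub_right by (rule supp_sum[OF v])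
    also have "\<dots> = 0"
    proof (cases "j \<in> Y \<and> m j = - g \<and> R' j")
      case True then show ?thesis using hv by simp
    next
      case nJ: False
      show ?thesis
      proof (rule sum.neutral, intro ballI)
        fix i assume i: "i \<in> {i\<in>X. m i = g \<and> R i}"
        have "B i j = 0"
        proof (rule ccontr)
          assume ne: "B i j \<noteq> 0"
          note BB = B_props[OF ne]
          have mj: "m j = - g" using BB i by simp
          have "eps i = -1" using gsig[of i] XN i eps_half_iff[of i] g by auto
          then have "eps j = -1" using BB by (simp add: minus_equation_iff)
          moreover have "cis (pi * (2 * m j)) = -1" using eps_half_iff[of j] mj g by auto
          ultimately have "j \<in> Np \<union> H \<union> Nm" using gsig by simp
          moreover have "j \<notin> H" using H_ev_i mj g by auto
          ultimately have "j \<in> Y" using cov False by blast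
          moreover have "R' j" using R i ne by auto
          ultimately show False using nJ mj by simp
        qed
        then show "v i * B i j = 0" by simp
      qed
    qed
    finally show ?thesis .
  qed
  then have "frm B v b = 0" for b by (subst frm_expand_right) simp
  then show "v = vzero" using fnd by blast
qed simp

end


context ctx begin

definition V where "V = {i. m i = 1/2 \<and> eps i = -1}"

lemma Vset_eq: "{i. cis (2 * pi * mu i) = cis (pi * (2 * m i)) \<and> m i = 1/2} = V"
  unfolding V_def using eps_half_iff by auto

lemma Om_ub_supp_left: "u \<in> supp_on I \<Longrightarrow> frm B f (brk c (ub j) u) = (\<Sum>k\<in>I. u k * om j k)"
  unfolding om_def by (subst Om_right) (rule supp_sum)

lemma om_par: "om k j \<noteq> 0 \<Longrightarrow> p k = p j" using om_props by blast

lemma Om_swap: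
  assumes u: "u \<in> supp_on I" and P: "\<forall>k\<in>I. p k = P" and pj: "p j = P"
  shows "frm B f (brk c (ub j) u) = - psign P * frm B f (brk c u (ub j))"
proof -
  have "frm B f (brk c (ub j) u) = (\<Sum>k\<in>I. u k * om j k)" by (rule Om_ub_supp_left[OF u])
  also have "\<dots> = (\<Sum>k\<in>I. - psign P * (u k * om k j))"
  proof (rule sum.cong[OF refl])
    fix k assume "k \<in> I"
    then have "psign (p j \<and> p k) = psign P" using P pj by simp
    then show "u k * om j k = - psign P * (u k * om k j)" using om_anti[of j k] by simp
  qed
  also have "\<dots> = - psign P * (\<Sum>k\<in>I. u k * om k j)" by (simp add: sum_distrib_left)
  also have "(\<Sum>k\<in>I. u k * om k j) = frm B f (brk c u (ub j))" by (rule Om_ub_supp[OF u, symmetric])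
  finally show ?thesis .
qed

lemma Om_par0:
  assumes u: "u \<in> supp_on I" and P: "\<forall>k\<in>I. p k = P" and pj: "p j \<noteq> P"
  shows "frm B f (brk c u (ub j)) = 0 \<and> frm B f (brk c (ub j) u) = 0"
proof -
  have "om k j = 0" "om j k = 0" if "k \<in> I" for k using om_par[of k j] om_par[of j k] P pj that by auto
  then show ?thesis using Om_ub_supp[OF u] Om_ub_supp_left[OF u] by simp
qed

lemma Om_self:
  assumes u: "u \<in> supp_on I" and P: "\<forall>k\<in>I. p k = P"
  shows "frm B f (brk c u u) = - psign P * frm B f (brk c u u)"
proof -
  have "frm B f (brk c u u) = (\<Sum>j\<in>I. u j * frm B f (brk c (ub j) u))"
    by (subst Om_left) (rule supp_sum[OF u])
  also have "\<dots> = (\<Sum>j\<in>I. - psign P * (u j * frm B f (brk c u (ub j))))"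
    by (rule sum.cong[OF refl]) (simp add: Om_swap[OF u P] P)
  also have "\<dots> = - psign P * (\<Sum>j\<in>I. u j * frm B f (brk c u (ub j)))" by (simp add: sum_distrib_left)
  also have "(\<Sum>j\<in>I. u j * frm B f (brk c u (ub j))) = frm B f (brk c u u)"
    by (subst (2) Om_right) (rule supp_sum[OF u, symmetric])
  finally show ?thesis .
qed

lemma Om_self_even:
  assumes u: "u \<in> supp_on I" and P: "\<forall>k\<in>I. \<not> p k"
  shows "frm B f (brk c u u) = 0"
  using Om_self[OF u, of False] P by (simp add: psign_def)

lemma E_ext:
  assumes mi: "max_isotropic (\<lambda>a b. frm B f (brk c a b)) (supp_on V) (supp_on S)"
    and uV: "u \<in> supp_on V" and uS: "u \<notin> supp_on S" and uu: "frm B f (brk c u u) = 0"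
    and uj: "\<And>j. j \<in> S \<Longrightarrow> frm B f (brk c u (ub j)) = 0 \<and> frm B f (brk c (ub j) u) = 0"
  shows False
proof -
  have sub: "subspace (supp_on S)" and SV: "supp_on S \<subseteq> supp_on V"
    and iso: "\<forall>a\<in>supp_on S. \<forall>b\<in>supp_on S. frm B f (brk c a b) = 0"
    and mx: "\<And>W'. subspace W' \<and> supp_on S \<subseteq> W' \<and> W' \<subseteq> supp_on V \<and>
       (\<forall>a\<in>W'. \<forall>b\<in>W'. frm B f (brk c a b) = 0) \<Longrightarrow> W' = supp_on S"
    using mi unfolding max_isotropic_def by blast+
  have uw: "frm B f (brk c w u) = 0 \<and> frm B f (brk c u w) = 0" if w: "w \<in> supp_on S" for w
  proof -
    have "frm B f (brk c w u) = (\<Sum>k\<in>S. w k * frm B f (brk c (ub k) u))"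
      by (subst Om_left) (rule supp_sum[OF w])
    moreover have "frm B f (brk c u w) = (\<Sum>k\<in>S. w k * frm B f (brk c u (ub k)))"
      by (subst Om_right) (rule supp_sum[OF w])
    ultimately show ?thesis using uj by simp
  qed
  define W' where "W' = {vadd w (vsc t u) |w t. w \<in> supp_on S}"
  have z: "vzero \<in> supp_on S" using sub by (simp add: subspace_def)
  have "subspace W'"
    unfolding subspace_def
  proof (intro conjI ballI allI impI)
    have "vzero = vadd vzero (vsc 0 u)" by (simp add: vadd_def vsc_def vzero_def)
    then show "vzero \<in> W'" unfolding W'_def using z by blast
  next
    fix a b assume "a \<in> W'" "b \<in> W'"
    then obtain w1 t1 w2 t2 where a: "a = vadd w1 (vsc t1 u)" "w1 \<in> supp_on S"
      and b: "b = vadd w2 (vsc t2 u)" "w2 \<in> supp_on S" unfolding W'_def by blast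
    have "vadd w1 w2 \<in> supp_on S" using sub a(2) b(2) by (simp add: subspace_def)
    moreover have "vadd a b = vadd (vadd w1 w2) (vsc (t1 + t2) u)"
      unfolding a b by (simp add: vadd_def vsc_def fun_eq_iff algebra_simps)
    ultimately show "vadd a b \<in> W'" unfolding W'_def by blast
  next
    fix s a assume "a \<in> W'"
    then obtain w1 t1 where a: "a = vadd w1 (vsc t1 u)" "w1 \<in> supp_on S" unfolding W'_def by blast
    have "vsc s w1 \<in> supp_on S" using sub a(2) by (simp add: subspace_def)
    moreover have "vsc s a = vadd (vsc s w1) (vsc (s * t1) u)"
      unfolding a by (simp add: vadd_def vsc_def fun_eq_iff algebra_simps)
    ultimately show "vsc s a \<in> W'" unfolding W'_def by blast
  qed
  moreover have "supp_on S \<subseteq> W'"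
  proof
    fix w assume "w \<in> supp_on S"
    moreover have "w = vadd w (vsc 0 u)" by (simp add: vadd_def vsc_def)
    ultimately show "w \<in> W'" unfolding W'_def by blast
  qed
  moreover have "W' \<subseteq> supp_on V"
  proof
    fix a assume "a \<in> W'"
    then obtain w1 t1 where a: "a = vadd w1 (vsc t1 u)" "w1 \<in> supp_on S" unfolding W'_def by blast
    have "w1 \<in> supp_on V" using a(2) SV by blast
    then show "a \<in> supp_on V" using uV unfolding a by (auto simp: supp_on_def vadd_def vsc_def)
  qed
  moreover have "\<forall>a\<in>W'. \<forall>b\<in>W'. frm B f (brk c a b) = 0"
  proof (intro ballI)
    fix a b assume "a \<in> W'" "b \<in> W'"
    then obtain w1 t1 w2 t2 where a: "a = vadd w1 (vsc t1 u)" "w1 \<in> supp_on S"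
      and b: "b = vadd w2 (vsc t2 u)" "w2 \<in> supp_on S" unfolding W'_def by blast
    show "frm B f (brk c a b) = 0"
      unfolding a b Om_bil using iso a(2) b(2) uw[OF a(2)] uw[OF b(2)] uu by simp
  qed
  ultimately have "W' = supp_on S" using mx by blast
  moreover have "u \<in> W'"
  proof -
    have "u = vadd vzero (vsc 1 u)" by (simp add: vadd_def vsc_def vzero_def)
    then show ?thesis unfolding W'_def using z by blast
  qed
  ultimately show False using uS by simp
qed

lemma E_core:
  assumes mi: "max_isotropic (\<lambda>a b. frm B f (brk c a b)) (supp_on V) (supp_on S)"
    and u: "u \<in> supp_on ((V - S) \<inter> {i. p i = P})" and unz: "u \<noteq> vzero"
    and ker: "\<forall>j\<in>S \<inter> {i. p i = P}. (\<Sum>k\<in>(V - S) \<inter> {i. p i = P}. u k * om k j) = 0"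
    and uu: "frm B f (brk c u u) = 0"
  shows False
proof (rule E_ext[OF mi _ _ uu])
  show "u \<in> supp_on V" using u by (rule supp_sub) auto
  show "u \<notin> supp_on S"
  proof
    assume "u \<in> supp_on S"
    then have "u = vzero" using u by (auto simp: supp_on_def vzero_def fun_eq_iff)
    then show False using unz by simp
  qed
  fix j assume j: "j \<in> S"
  have P: "\<forall>k\<in>(V - S) \<inter> {i. p i = P}. p k = P" by simp
  show "frm B f (brk c u (ub j)) = 0 \<and> frm B f (brk c (ub j) u) = 0"
  proof (cases "p j = P")
    case True
    have "frm B f (brk c u (ub j)) = 0" using Om_ub_supp[OF u] ker j True by simp
    moreover have "frm B f (brk c (ub j) u) = - psign P * frm B f (brk c u (ub j))"
      by (rule Om_swap[OF u P True])
    ultimately show ?thesis by simp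
  next
    case False
    then show ?thesis using Om_par0[OF u P] by blast
  qed
qed

lemma E_even:
  assumes mi: "max_isotropic (\<lambda>a b. frm B f (brk c a b)) (supp_on V) (supp_on S)"
  shows "card ((V - S) \<inter> {i. p i = False}) \<le> card (S \<inter> {i. p i = False})"
proof (rule ccontr)
  assume "\<not> ?thesis"
  then have "card (S \<inter> {i. p i = False}) < card ((V - S) \<inter> {i. p i = False})" by simp
  then obtain u where u: "u \<in> supp_on ((V - S) \<inter> {i. p i = False})" "u \<noteq> vzero"
    "\<forall>j\<in>S \<inter> {i. p i = False}. (\<Sum>k\<in>(V - S) \<inter> {i. p i = False}. u k * om k j) = 0"
    using kernel_vec[of "S \<inter> {i. p i = False}" "(V - S) \<inter> {i. p i = False}" om] by auto
  have "frm B f (brk c u u) = 0" by (rule Om_self_even[OF u(1)]) simp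
  then show False using E_core[OF mi u] by blast
qed

lemma E_odd:
  assumes mi: "max_isotropic (\<lambda>a b. frm B f (brk c a b)) (supp_on V) (supp_on S)"
  shows "card ((V - S) \<inter> {i. p i = True}) \<le> card (S \<inter> {i. p i = True}) + 1"
proof (rule ccontr)
  let ?I = "(V - S) \<inter> {i. p i = True}" and ?J = "S \<inter> {i. p i = True}"
  assume "\<not> ?thesis"
  then have "card ?J + 2 \<le> card ?I" by simp
  then obtain u1 u2 k where u1: "u1 \<in> supp_on ?I" and u2: "u2 \<in> supp_on ?I" and k: "k \<in> ?I"
    "u1 k \<noteq> 0" "u2 k = 0" "u2 \<noteq> vzero"
    and ker1: "\<forall>j\<in>?J. (\<Sum>k\<in>?I. u1 k * om k j) = 0" and ker2: "\<forall>j\<in>?J. (\<Sum>k\<in>?I. u2 k * om k j) = 0"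
    using kernel_vec2[of ?J ?I om] by auto
  have ker: "\<forall>j\<in>?J. (\<Sum>k\<in>?I. vadd u2 (vsc l u1) k * om k j) = 0" for l
    using ker1 ker2 by (simp add: vadd_def vsc_def algebra_simps sum.distrib sum_distrib_left[symmetric])
  have vs: "vadd u2 (vsc l u1) \<in> supp_on ?I" for l
    using u1 u2 by (auto simp: supp_on_def vadd_def vsc_def)
  show False
  proof (cases "frm B f (brk c u1 u1) = 0")
    case True
    have "u1 \<noteq> vzero" using k(2) by (auto simp: vzero_def)
    then show False using E_core[OF mi u1 _ ker1 True] by blast
  next
    case False
    obtain l where l: "frm B f (brk c u1 u1) * l^2 + (frm B f (brk c u2 u1) + frm B f (brk c u1 u2)) * l
       + frm B f (brk c u2 u2) = 0"
      using quad_root[OF False] by blast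
    let ?v = "vadd u2 (vsc l u1)"
    have "frm B f (brk c ?v ?v) = frm B f (brk c u1 u1) * l^2 + (frm B f (brk c u2 u1) + frm B f (brk c u1 u2)) * l
       + frm B f (brk c u2 u2)"
      by (simp add: Om_bil algebra_simps power2_eq_square)
    then have vv: "frm B f (brk c ?v ?v) = 0" using l by simp
    have vnz: "?v \<noteq> vzero"
    proof (cases "l = 0")
      case True then show ?thesis using k(4) by (simp add: vadd_def vsc_def vzero_def)
    next
      case False
      have "?v k \<noteq> 0" using k False by (simp add: vadd_def vsc_def)
      then show ?thesis by (auto simp: vzero_def)
    qed
    show False using E_core[OF mi vs vnz ker vv] by blast
  qed
qed

lemma E_iso:
  assumes mi: "max_isotropic (\<lambda>a b. frm B f (brk c a b)) (supp_on V) (supp_on S)" and SV: "S \<subseteq> V"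
  shows "card (S \<inter> {i. p i = P}) \<le> card ((V - S) \<inter> {i. p i = P})"
proof (rule card_le_of_inj[where M = om])
  have iso: "\<forall>a\<in>supp_on S. \<forall>b\<in>supp_on S. frm B f (brk c a b) = 0"
    using mi unfolding max_isotropic_def by blast
  fix v assume v: "v \<in> supp_on (S \<inter> {i. p i = P})"
    and hv: "\<forall>j\<in>(V - S) \<inter> {i. p i = P}. (\<Sum>k\<in>S \<inter> {i. p i = P}. v k * om k j) = 0"
  have vS: "v \<in> supp_on S" using v by (rule supp_sub) auto
  have "frm B f (brk c v (ub j)) = 0" for j
  proof (cases "j \<in> S")
    case True
    have "ub j \<in> supp_on S" using True by (auto simp: supp_on_def ub_def)
    then show ?thesis using iso vS by blast
  next
    case jS: False
    have "frm B f (brk c v (ub j)) = (\<Sum>k\<in>S \<inter> {i. p i = P}. v k * om k j)" by (rule Om_ub_supp[OF v])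
    also have "\<dots> = 0"
    proof (cases "j \<in> V \<and> p j = P")
      case True then show ?thesis using hv jS by simp
    next
      case nJ: False
      show ?thesis
      proof (rule sum.neutral, intro ballI)
        fix k assume k: "k \<in> S \<inter> {i. p i = P}"
        have "om k j = 0"
        proof (rule ccontr)
          assume ne: "om k j \<noteq> 0"
          note O = om_props[OF ne]
          have kV: "k \<in> V" using k SV by blast
          then have "m j = 1/2" using O by (simp add: V_def)
          moreover have "eps j = -1" using O kV by (simp add: V_def minus_equation_iff)
          moreover have "p j = P" using O k by simp
          ultimately show False using nJ by (simp add: V_def)
        qed
        then show "v k * om k j = 0" by simp
      qed
    qed
    finally show ?thesis .
  qed
  moreover have "v \<in> supp_on {i. m i = 1/2}" using vS SV by (auto simp: supp_on_def V_def)
  ultimately show "v = vzero" using om_nondeg by blast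
qed simp

end


lemma frm_lin_left:
  "frm B (\<lambda>k. \<Sum>i\<in>UNIV. g i * w i k) b = (\<Sum>i\<in>UNIV. g i * frm B (w i) b)"
  for B :: "'i::finite \<Rightarrow> 'i \<Rightarrow> complex"
proof -
  have el: "frm B a b = (\<Sum>i\<in>UNIV. a i * frm B (ub i) b)" for a
    unfolding frm_ub_left unfolding frm_def by (simp add: sum_distrib_left mult_ac)
  have "frm B (\<lambda>k. \<Sum>i\<in>UNIV. g i * w i k) b = (\<Sum>k\<in>UNIV. (\<Sum>i\<in>UNIV. g i * w i k) * frm B (ub k) b)"
    by (subst el) simp
  also have "\<dots> = (\<Sum>i\<in>UNIV. g i * (\<Sum>k\<in>UNIV. w i k * frm B (ub k) b))"
    by (simp add: sum_distrib_left sum_distrib_right mult_ac) (rule sum.swap)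
  also have "\<dots> = (\<Sum>i\<in>UNIV. g i * frm B (w i) b)"
    by (simp add: el[symmetric])
  finally show ?thesis .
qed

context ctx begin

lemma sum_part:
  assumes "ie \<in> X" "jf \<in> X" "{i. m i = 1/2} \<subseteq> X" "{i. m i = -1/2} \<subseteq> X"
  shows "sum g X = sum g (X \<inter> {i. m i = 0}) + sum g {i. m i = 1/2} + sum g {i. m i = -1/2} + g ie + g jf"
proof -
  have X: "X = insert jf (insert ie ((X \<inter> {i. m i = 0}) \<union> {i. m i = 1/2} \<union> {i. m i = -1/2}))"
  proof (rule set_eqI)
    fix i
    show "i \<in> X \<longleftrightarrow> i \<in> insert jf (insert ie ((X \<inter> {i. m i = 0}) \<union> {i. m i = 1/2} \<union> {i. m i = -1/2}))"
      using m_vals[of i]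
    proof (elim disjE)
      assume "m i = -1" then have "i = jf" using m_eq_m1 by blast
      then show ?thesis using assms by blast
    next
      assume "m i = 1" then have "i = ie" using m_eq_1 by blast
      then show ?thesis using assms by blast
    next
      assume h: "m i = 0"
      have "i \<noteq> ie" "i \<noteq> jf" using h m_ie m_jf by auto
      then show ?thesis using h by auto
    next
      assume h: "m i = 1/2"
      then show ?thesis using assms by auto
    next
      assume h: "m i = -1/2"
      then show ?thesis using assms by auto
    qed
  qed
  have "sum g X = g jf + (g ie + sum g ((X \<inter> {i. m i = 0}) \<union> {i. m i = 1/2} \<union> {i. m i = -1/2}))"
  proof -
    have n2: "ie \<notin> (X \<inter> {i. m i = 0}) \<union> {i. m i = 1/2} \<union> {i. m i = -1/2}" using m_ie by auto
    have n1: "jf \<notin> insert ie ((X \<inter> {i. m i = 0}) \<union> {i. m i = 1/2} \<union> {i. m i = -1/2})"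
      using m_ie m_jf by auto
    show ?thesis by (subst X) (simp only: sum.insert[OF _ n1] sum.insert[OF _ n2] finite)
  qed
  also have "sum g ((X \<inter> {i. m i = 0}) \<union> {i. m i = 1/2} \<union> {i. m i = -1/2}) =
      sum g (X \<inter> {i. m i = 0}) + sum g {i. m i = 1/2} + sum g {i. m i = -1/2}"
    by (subst sum.union_disjoint, simp, simp, force)+ simp
  finally show ?thesis by (simp add: algebra_simps)
qed

lemma brk_ub_x: "brk c (ub k) x = vsc (- of_real (m k)) (ub k)"
proof
  fix l
  have "brk c (ub k) x l = (\<Sum>j\<in>UNIV. x j * c k j l)" by (simp add: brk_ub_left)
  also have "\<dots> = (\<Sum>j\<in>UNIV. - (x j * c j k l))"
  proof (rule sum.cong[OF refl])
    fix j
    show "x j * c k j l = - (x j * c j k l)"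
    proof (cases "x j = 0")
      case False
      then have "\<not> p j" using H_ev[OF x_H] by blast
      then show ?thesis using c_antisym[of k j l] by (simp add: psign_def)
    qed simp
  qed
  also have "\<dots> = - brk c x (ub k) l" by (simp add: brk_ub_right sum_negf)
  also have "\<dots> = vsc (- of_real (m k)) (ub k) l" using grading by (simp add: vsc_def)
  finally show "brk c (ub k) x l = vsc (- of_real (m k)) (ub k) l" .
qed

lemma hv_formula: "hv = (\<Sum>i\<in>UNIV. psign (p i) * (of_real (m i))^2)"
proof -
  obtain D where D: "dual_basis B D" "\<And>a. casimir c D a = vsc (2 * hv) a"
    using hvee unfolding dual_coxeter_def by blast
  have "frm B (casimir c D x) x = 2 * hv * frm B x x" using D(2)[of x] by (simp add: frm_bil)
  then have "frm B (casimir c D x) x = hv" using theta_norm by simp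
  moreover have "frm B (casimir c D x) x = (\<Sum>i\<in>UNIV. \<Sum>k\<in>UNIV. D i k * ((of_real (m k))^2 * B i k))"
  proof -
    have inner: "frm B (brk c (ub i) (brk c (ub k) x)) x = (of_real (m k))^2 * B i k" for i k
      by (simp add: finv brk_ub_x brk_bil frm_bil frm_ub_ub power2_eq_square)
    define W where "W i = (\<lambda>l. \<Sum>k\<in>UNIV. D i k * brk c (ub i) (brk c (ub k) x) l)" for i
    have "casimir c D x = (\<lambda>l. \<Sum>i\<in>UNIV. W i l)" by (simp add: casimir_def W_def)
    then have "frm B (casimir c D x) x = (\<Sum>i\<in>UNIV. frm B (W i) x)"
      using frm_lin_left[of B "\<lambda>_. 1" W x] by simp
    also have "\<dots> = (\<Sum>i\<in>UNIV. \<Sum>k\<in>UNIV. D i k * frm B (brk c (ub i) (brk c (ub k) x)) x)"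
      unfolding W_def by (simp add: frm_lin_left)
    finally show ?thesis by (simp add: inner)
  qed
  moreover have "(\<Sum>k\<in>UNIV. D i k * ((of_real (m k))^2 * B i k)) = psign (p i) * (of_real (m i))^2" for i
  proof -
    have "(\<Sum>k\<in>UNIV. D i k * ((of_real (m k))^2 * B i k)) =
          (\<Sum>k\<in>UNIV. psign (p i) * (of_real (m i))^2 * (D i k * B k i))"
    proof (rule sum.cong[OF refl])
      fix k
      show "D i k * ((of_real (m k))^2 * B i k) = psign (p i) * (of_real (m i))^2 * (D i k * B k i)"
      proof (cases "B i k = 0")
        case True
        have "B k i = 0" using True Bsym[of k i] by simp
        then show ?thesis using True by simp
      next
        case False
        note BB = B_props[OF False]
        have "m k = - m i" using BB by simp
        moreover have "B i k = psign (p i) * B k i" using Bsym[of i k] BB by simp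
        ultimately show ?thesis by (simp add: power2_eq_square)
      qed
    qed
    also have "\<dots> = psign (p i) * (of_real (m i))^2 * (\<Sum>k\<in>UNIV. D i k * B k i)"
      by (simp add: sum_distrib_left)
    also have "(\<Sum>k\<in>UNIV. D i k * B k i) = 1"
      using D(1) unfolding dual_basis_def by (metis frm_ub_right)
    finally show ?thesis by simp
  qed
  ultimately show ?thesis by simp
qed

lemma sum_psign: "(\<Sum>i\<in>S. psign (p i)) = of_nat (card (S \<inter> {i. p i = False})) - of_nat (card (S \<inter> {i. p i = True}))"
proof -
  have "(\<Sum>i\<in>S. psign (p i)) = (\<Sum>i\<in>S \<inter> {i. p i = False}. psign (p i)) + (\<Sum>i\<in>S - {i. p i = False}. psign (p i))"
    by (rule sum.Int_Diff) simp
  also have "S - {i. p i = False} = S \<inter> {i. p i = True}" by auto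
  finally show ?thesis by (simp add: psign_def)
qed

end


context ctx begin

abbreviation s where "s i \<equiv> sval Np m mu i"

lemma half_Np_eps: "i \<in> Np \<Longrightarrow> m i = 1/2 \<or> m i = -1/2 \<Longrightarrow> eps i = -1"
  using gsig[of i] eps_half_iff[of i] by auto

lemma half_Nm_eps: "i \<in> Nm \<Longrightarrow> m i = 1/2 \<or> m i = -1/2 \<Longrightarrow> eps i = -1"
  using gsig[of i] eps_half_iff[of i] by auto

lemma half_sig: "m i = 1/2 \<or> m i = -1/2 \<Longrightarrow> eps i = -1 \<Longrightarrow> i \<in> Np \<or> i \<in> Nm"
proof -
  assume h: "m i = 1/2 \<or> m i = -1/2" "eps i = -1"
  then have "i \<in> Np \<union> H \<union> Nm" using gsig eps_half_iff by simp
  moreover have "i \<notin> H" using H_ev_i h by auto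
  ultimately show ?thesis by blast
qed

lemma N1:
  assumes h: "h \<in> supp_on H"
  shows "(\<Sum>k\<in>{k. m k = -1/2 \<and> eps k \<noteq> -1}. psign (p k) * of_real (s k) * wt c k h) =
         (\<Sum>i\<in>{i. m i = 1/2 \<and> eps i \<noteq> -1}. psign (p i) * (of_real (s i) + 1) * (wt c i h - th h))"
proof (rule sum_fiber[where kA = "\<lambda>k. (p k, eps k, wt c k h + th h)" and kB = "\<lambda>i. (p i, eps i, wt c i h)"])
  fix v :: "bool \<times> complex \<times> complex"
  obtain P e0 b where v: "v = (P, e0, b)" by (cases v) auto
  have "card {i. m i = 1/2 \<and> (eps i \<noteq> -1 \<and> p i = P \<and> eps i = e0 \<and> wt c i h = b)}
      \<le> card {k. m k = -1/2 \<and> (eps k \<noteq> -1 \<and> p k = P \<and> eps k = e0 \<and> wt c k h + th h = b)}"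
  proof (rule cnt_f)
    fix i k assume "m i = 1/2" "eps i \<noteq> -1 \<and> p i = P \<and> eps i = e0 \<and> wt c i h = b" "c jf i k \<noteq> 0"
    then show "eps k \<noteq> -1 \<and> p k = P \<and> eps k = e0 \<and> wt c k h + th h = b"
      using c_props[of jf i k] p_jf eps_jf wt_jf[OF h] h by auto
  qed
  moreover have "card {k. m k = -1/2 \<and> (eps k \<noteq> -1 \<and> p k = P \<and> eps k = e0 \<and> wt c k h + th h = b)}
      \<le> card {i. m i = 1/2 \<and> (eps i \<noteq> -1 \<and> p i = P \<and> eps i = e0 \<and> wt c i h = b)}"
  proof (rule cnt_e)
    fix k i assume "m k = -1/2" "eps k \<noteq> -1 \<and> p k = P \<and> eps k = e0 \<and> wt c k h + th h = b" "c ie k i \<noteq> 0"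
    then show "eps i \<noteq> -1 \<and> p i = P \<and> eps i = e0 \<and> wt c i h = b"
      using c_props[of ie k i] p_ie eps_ie wt_ie[OF h] h by (auto simp: algebra_simps)
  qed
  ultimately show "card {k \<in> {k. m k = -1/2 \<and> eps k \<noteq> -1}. (p k, eps k, wt c k h + th h) = v} =
        card {i \<in> {i. m i = 1/2 \<and> eps i \<noteq> -1}. (p i, eps i, wt c i h) = v}"
    unfolding v by (simp add: conj_ac)
next
  fix k i assume k: "k \<in> {k. m k = -1/2 \<and> eps k \<noteq> -1}" and i: "i \<in> {i. m i = 1/2 \<and> eps i \<noteq> -1}"
    and kk: "(p k, eps k, wt c k h + th h) = (p i, eps i, wt c i h)"
  have "i \<notin> Np" using i half_Np_eps by auto
  moreover have "k \<notin> Np" using k half_Np_eps by auto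
  ultimately have "s k = s i + 1" using s_shift[of i k] i k kk by auto
  moreover have "wt c k h = wt c i h - th h" using kk by (simp add: algebra_simps)
  ultimately show "psign (p k) * of_real (s k) * wt c k h = psign (p i) * (of_real (s i) + 1) * (wt c i h - th h)"
    using kk by simp
qed simp_all

lemma N2: "(\<Sum>i\<in>{i. m i = 1/2 \<and> eps i \<noteq> -1}. psign (p i) * of_real (s i)) = 0"
proof -
  let ?S = "{i. m i = 1/2 \<and> eps i \<noteq> -1}"
  have "(\<Sum>i\<in>?S. psign (p i) * of_real (s i)) = (\<Sum>j\<in>?S. - (psign (p j) * of_real (s j)))"
  proof (rule sum_fiber[where kA = "\<lambda>i. (p i, eps i)" and kB = "\<lambda>j. (p j, cnj (eps j))"])
    fix v :: "bool \<times> complex"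
    obtain P e0 where v: "v = (P, e0)" by (cases v) auto
    have "card {i. m i = 1/2 \<and> (eps i \<noteq> -1 \<and> p i = P \<and> eps i = e0)}
      \<le> card {j. m j = 1/2 \<and> (eps j \<noteq> -1 \<and> p j = P \<and> cnj (eps j) = e0)}"
    proof (rule cnt_om)
      fix i j assume a: "m i = 1/2" "eps i \<noteq> -1 \<and> p i = P \<and> eps i = e0" "om i j \<noteq> 0"
      have ej: "eps j = cnj (eps i)" using om_props[OF a(3)] eps_inv by blast
      then have "eps j \<noteq> -1" using a(2) by (metis complex_cnj_cnj complex_cnj_minus complex_cnj_one)
      then show "eps j \<noteq> -1 \<and> p j = P \<and> cnj (eps j) = e0" using ej a om_props[OF a(3)] by simp
    qed
    moreover have "card {j. m j = 1/2 \<and> (eps j \<noteq> -1 \<and> p j = P \<and> cnj (eps j) = e0)}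
      \<le> card {i. m i = 1/2 \<and> (eps i \<noteq> -1 \<and> p i = P \<and> eps i = e0)}"
    proof (rule cnt_om)
      fix j i assume a: "m j = 1/2" "eps j \<noteq> -1 \<and> p j = P \<and> cnj (eps j) = e0" "om j i \<noteq> 0"
      have ei: "eps i = cnj (eps j)" using om_props[OF a(3)] eps_inv by blast
      then have "eps i \<noteq> -1" using a(2) by (metis complex_cnj_cnj complex_cnj_minus complex_cnj_one)
      then show "eps i \<noteq> -1 \<and> p i = P \<and> eps i = e0" using ei a om_props[OF a(3)] by simp
    qed
    ultimately show "card {i \<in> ?S. (p i, eps i) = v} = card {j \<in> ?S. (p j, cnj (eps j)) = v}"
      unfolding v by (simp add: conj_ac)
  next
    fix i j assume i: "i \<in> ?S" and j: "j \<in> ?S" and kk: "(p i, eps i) = (p j, cnj (eps j))"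
    have "eps j = cnj (eps i)" using kk by simp
    moreover have "i \<notin> Np" using i half_Np_eps by auto
    moreover have "j \<notin> Np" using j half_Np_eps by auto
    ultimately have "s j = - s i" using s_neg[of i j] i j by auto
    then show "psign (p i) * of_real (s i) = - (psign (p j) * of_real (s j))" using kk by simp
  qed simp_all
  then show ?thesis by (simp add: sum_negf)
qed

lemma N3:
  assumes h: "h \<in> supp_on H" and Q: "\<And>z. Q (cnj z) = Q z"
  shows "(\<Sum>i\<in>{i. m i = 1/2 \<and> Q (eps i)}. psign (p i) * wt c i h) =
         th h / 2 * (\<Sum>i\<in>{i. m i = 1/2 \<and> Q (eps i)}. psign (p i))"
proof -
  let ?S = "{i. m i = 1/2 \<and> Q (eps i)}"
  have "(\<Sum>i\<in>?S. psign (p i) * wt c i h) = (\<Sum>j\<in>?S. psign (p j) * (th h - wt c j h))"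
  proof (rule sum_fiber[where kA = "\<lambda>i. (p i, eps i, wt c i h)" and kB = "\<lambda>j. (p j, cnj (eps j), th h - wt c j h)"])
    fix v :: "bool \<times> complex \<times> complex"
    obtain P e0 b where v: "v = (P, e0, b)" by (cases v) auto
    have "card {i. m i = 1/2 \<and> (Q (eps i) \<and> p i = P \<and> eps i = e0 \<and> wt c i h = b)}
      \<le> card {j. m j = 1/2 \<and> (Q (eps j) \<and> p j = P \<and> cnj (eps j) = e0 \<and> th h - wt c j h = b)}"
    proof (rule cnt_om)
      fix i j assume a: "m i = 1/2" "Q (eps i) \<and> p i = P \<and> eps i = e0 \<and> wt c i h = b" "om i j \<noteq> 0"
      note O = om_props[OF a(3)]
      have ej: "eps j = cnj (eps i)" using O eps_inv by blast
      show "Q (eps j) \<and> p j = P \<and> cnj (eps j) = e0 \<and> th h - wt c j h = b"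
        using ej a O h Q[of "eps i"] by (auto simp: algebra_simps)
    qed
    moreover have "card {j. m j = 1/2 \<and> (Q (eps j) \<and> p j = P \<and> cnj (eps j) = e0 \<and> th h - wt c j h = b)}
      \<le> card {i. m i = 1/2 \<and> (Q (eps i) \<and> p i = P \<and> eps i = e0 \<and> wt c i h = b)}"
    proof (rule cnt_om)
      fix j i assume a: "m j = 1/2" "Q (eps j) \<and> p j = P \<and> cnj (eps j) = e0 \<and> th h - wt c j h = b" "om j i \<noteq> 0"
      note O = om_props[OF a(3)]
      have ei: "eps i = cnj (eps j)" using O eps_inv by blast
      show "Q (eps i) \<and> p i = P \<and> eps i = e0 \<and> wt c i h = b"
        using ei a O h Q[of "eps j"] by (auto simp: algebra_simps)
    qed
    ultimately show "card {i \<in> ?S. (p i, eps i, wt c i h) = v} = card {j \<in> ?S. (p j, cnj (eps j), th h - wt c j h) = v}"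
      unfolding v by (simp add: conj_ac)
  next
    fix i j assume "(p i, eps i, wt c i h) = (p j, cnj (eps j), th h - wt c j h)"
    then show "psign (p i) * wt c i h = psign (p j) * (th h - wt c j h)" by simp
  qed simp_all
  also have "\<dots> = th h * (\<Sum>j\<in>?S. psign (p j)) - (\<Sum>j\<in>?S. psign (p j) * wt c j h)"
    by (simp add: algebra_simps sum_subtractf sum_distrib_left)
  finally show ?thesis by (simp add: field_simps)
qed

lemma N4:
  assumes h: "h \<in> supp_on H"
    and isoX: "\<forall>a\<in>supp_on X. \<forall>b\<in>supp_on X. frm B a b = 0"
    and isoY: "\<forall>a\<in>supp_on Y. \<forall>b\<in>supp_on Y. frm B a b = 0"
    and XN: "X \<subseteq> Np \<union> Nm" and YN: "Y \<subseteq> Np \<union> Nm" and cov: "Np \<union> Nm \<subseteq> X \<union> Y"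
    and g: "g = 1/2 \<or> g = -1/2"
  shows "(\<Sum>i\<in>{i\<in>X. m i = g}. psign (p i) * wt c i h) = - (\<Sum>j\<in>{j\<in>Y. m j = - g}. psign (p j) * wt c j h)"
proof -
  have "(\<Sum>i\<in>{i\<in>X. m i = g}. psign (p i) * wt c i h) = (\<Sum>j\<in>{j\<in>Y. m j = - g}. - (psign (p j) * wt c j h))"
  proof (rule sum_fiber[where kA = "\<lambda>i. (p i, wt c i h)" and kB = "\<lambda>j. (p j, - wt c j h)"])
    fix v :: "bool \<times> complex"
    obtain P b where v: "v = (P, b)" by (cases v) auto
    have "card {i\<in>X. m i = g \<and> (p i = P \<and> wt c i h = b)} \<le> card {j\<in>Y. m j = - g \<and> (p j = P \<and> - wt c j h = b)}"
    proof (rule cnt_B[OF isoX XN cov g])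
      fix i j assume a: "i \<in> X" "p i = P \<and> wt c i h = b" "B i j \<noteq> 0"
      have "wt c i h + wt c j h = 0" "p i = p j" using B_props[OF a(3)] h by auto
      moreover have "wt c i h = - wt c j h" using calculation(1) by (simp add: eq_neg_iff_add_eq_0)
      ultimately show "p j = P \<and> - wt c j h = b" using a(2) by simp
    qed
    moreover have "card {j\<in>Y. m j = - g \<and> (p j = P \<and> - wt c j h = b)} \<le> card {i\<in>X. m i = - (- g) \<and> (p i = P \<and> wt c i h = b)}"
    proof (rule cnt_B[OF isoY YN])
      show "Np \<union> Nm \<subseteq> Y \<union> X" using cov by blast
      show "- g = 1/2 \<or> - g = -1/2" using g by auto
      fix j i assume a: "j \<in> Y" "p j = P \<and> - wt c j h = b" "B j i \<noteq> 0"
      have "wt c j h + wt c i h = 0" "p j = p i" using B_props[OF a(3)] h by auto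
      moreover have "wt c i h = - wt c j h" using calculation(1) by (simp add: eq_neg_iff_add_eq_0 add.commute)
      ultimately show "p i = P \<and> wt c i h = b" using a(2) by simp
    qed
    ultimately show "card {i \<in> {i\<in>X. m i = g}. (p i, wt c i h) = v} = card {j \<in> {j\<in>Y. m j = - g}. (p j, - wt c j h) = v}"
      unfolding v by (simp add: conj_ac)
  next
    fix i j assume "(p i, wt c i h) = (p j, - wt c j h)"
    then show "psign (p i) * wt c i h = - (psign (p j) * wt c j h)" by simp
  qed simp_all
  then show ?thesis by (simp add: sum_negf)
qed

end


context ctx begin

lemma splitA: "sum g {i. m i = 1/2} = sum g {i. m i = 1/2 \<and> eps i \<noteq> -1} + sum g {i\<in>Np. m i = 1/2} + sum g {i\<in>Nm. m i = 1/2}"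
proof -
  have e: "{i. m i = 1/2} = ({i. m i = 1/2 \<and> eps i \<noteq> -1} \<union> {i\<in>Np. m i = 1/2}) \<union> {i\<in>Nm. m i = 1/2}"
    using half_sig[of _] by auto
  have d1: "{i. m i = 1/2 \<and> eps i \<noteq> -1} \<inter> {i\<in>Np. m i = 1/2} = {}" using half_Np_eps by auto
  have d2: "({i. m i = 1/2 \<and> eps i \<noteq> -1} \<union> {i\<in>Np. m i = 1/2}) \<inter> {i\<in>Nm. m i = 1/2} = {}"
    using half_Nm_eps disj(3) by auto
  show ?thesis unfolding e sum.union_disjoint[OF finite finite d2] sum.union_disjoint[OF finite finite d1] ..
qed

lemma splitB: "sum g {i. m i = -1/2} = sum g {i. m i = -1/2 \<and> eps i \<noteq> -1} + sum g {i\<in>Np. m i = -1/2} + sum g {i\<in>Nm. m i = -1/2}"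
proof -
  have e: "{i. m i = -1/2} = ({i. m i = -1/2 \<and> eps i \<noteq> -1} \<union> {i\<in>Np. m i = -1/2}) \<union> {i\<in>Nm. m i = -1/2}"
    using half_sig[of _] by auto
  have d1: "{i. m i = -1/2 \<and> eps i \<noteq> -1} \<inter> {i\<in>Np. m i = -1/2} = {}" using half_Np_eps by auto
  have d2: "({i. m i = -1/2 \<and> eps i \<noteq> -1} \<union> {i\<in>Np. m i = -1/2}) \<inter> {i\<in>Nm. m i = -1/2} = {}"
    using half_Nm_eps disj(3) by auto
  show ?thesis unfolding e sum.union_disjoint[OF finite finite d2] sum.union_disjoint[OF finite finite d1] ..
qed

lemma Vsplit: "sum g {i. m i = 1/2 \<and> eps i = -1} = sum g {i\<in>Np. m i = 1/2} + sum g {i\<in>Nm. m i = 1/2}"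
proof -
  have e: "{i. m i = 1/2 \<and> eps i = -1} = {i\<in>Np. m i = 1/2} \<union> {i\<in>Nm. m i = 1/2}"
    using half_sig[of _] half_Np_eps half_Nm_eps by auto
  have d: "{i\<in>Np. m i = 1/2} \<inter> {i\<in>Nm. m i = 1/2} = {}" using disj(3) by auto
  show ?thesis unfolding e sum.union_disjoint[OF finite finite d] ..
qed

lemma b_core:
  assumes h: "h \<in> supp_on H"
  shows "(\<Sum>k\<in>{k. m k = -1/2}. psign (p k) * of_real (s k) * wt c k h)
       - (\<Sum>i\<in>{i. m i = 1/2}. psign (p i) * of_real (s i) * wt c i h)
       = - (th h / 2) * (\<Sum>i\<in>{i. m i = 1/2}. psign (p i))"
proof -
  define T where "T i = psign (p i) * of_real (s i) * wt c i h" for i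
  define Xp where "Xp = (\<Sum>i\<in>{i\<in>Np. m i = 1/2}. psign (p i) * wt c i h)"
  define Xm where "Xm = (\<Sum>i\<in>{i\<in>Nm. m i = 1/2}. psign (p i) * wt c i h)"
  have isoP: "\<forall>a\<in>supp_on Np. \<forall>b\<in>supp_on Np. frm B a b = 0" by (rule nplus(3))
  have isoM: "\<forall>a\<in>supp_on Nm. \<forall>b\<in>supp_on Nm. frm B a b = 0" by (rule nminus(3))
  have F1: "(\<Sum>i\<in>{i\<in>Np. m i = 1/2}. T i) = - (1/2) * Xp"
    unfolding Xp_def T_def sum_distrib_left
  proof (rule sum.cong[OF refl])
    fix i assume i: "i \<in> {i\<in>Np. m i = 1/2}"
    then have hs: "s i = - (1/2)" using sval_Np by simp
    show "psign (p i) * of_real (s i) * wt c i h = - (1/2) * (psign (p i) * wt c i h)" unfolding hs by simp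
  qed
  have F2: "(\<Sum>i\<in>{i\<in>Nm. m i = 1/2}. T i) = (1/2) * Xm"
    unfolding Xm_def T_def sum_distrib_left
  proof (rule sum.cong[OF refl])
    fix i assume i: "i \<in> {i\<in>Nm. m i = 1/2}"
    have "i \<notin> Np" using i disj(3) by auto
    moreover have "eps i = -1" using i half_Nm_eps by auto
    ultimately have hs: "s i = 1/2" using s_sig_p i by auto
    show "psign (p i) * of_real (s i) * wt c i h = 1/2 * (psign (p i) * wt c i h)" unfolding hs by simp
  qed
  have F3: "(\<Sum>i\<in>{i\<in>Np. m i = -1/2}. T i) = (1/2) * (- Xm)"
  proof -
    have "(\<Sum>i\<in>{i\<in>Np. m i = -1/2}. T i) = (1/2) * (\<Sum>i\<in>{i\<in>Np. m i = -1/2}. psign (p i) * wt c i h)"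
      unfolding T_def sum_distrib_left
    proof (rule sum.cong[OF refl])
      fix i assume i: "i \<in> {i\<in>Np. m i = -1/2}"
      then have hs: "s i = 1/2" using sval_Np by simp
      show "psign (p i) * of_real (s i) * wt c i h = 1/2 * (psign (p i) * wt c i h)" unfolding hs by simp
    qed
    moreover have "(\<Sum>i\<in>{i\<in>Np. m i = -1/2}. psign (p i) * wt c i h) = - Xm"
      using N4[OF h isoP isoM _ _ _, of "-1/2"] unfolding Xm_def by auto
    ultimately show ?thesis by (simp only:)
  qed
  have F4: "(\<Sum>i\<in>{i\<in>Nm. m i = -1/2}. T i) = (3/2) * (- Xp)"
  proof -
    have "(\<Sum>i\<in>{i\<in>Nm. m i = -1/2}. T i) = (3/2) * (\<Sum>i\<in>{i\<in>Nm. m i = -1/2}. psign (p i) * wt c i h)"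
      unfolding T_def sum_distrib_left
    proof (rule sum.cong[OF refl])
      fix i assume i: "i \<in> {i\<in>Nm. m i = -1/2}"
      have "i \<notin> Np" using i disj(3) by auto
      moreover have "eps i = -1" using i half_Nm_eps by auto
      ultimately have hs: "s i = 3/2" using s_sig_m i by auto
      show "psign (p i) * of_real (s i) * wt c i h = 3/2 * (psign (p i) * wt c i h)" unfolding hs by simp
    qed
    moreover have "(\<Sum>i\<in>{i\<in>Nm. m i = -1/2}. psign (p i) * wt c i h) = - Xp"
      using N4[OF h isoM isoP _ _ _, of "-1/2"] unfolding Xp_def by auto
    ultimately show ?thesis by (simp only:)
  qed
  have F7: "Xp + Xm = th h / 2 * ((\<Sum>i\<in>{i\<in>Np. m i = 1/2}. psign (p i)) + (\<Sum>i\<in>{i\<in>Nm. m i = 1/2}. psign (p i)))"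
  proof -
    have "(\<Sum>i\<in>{i. m i = 1/2 \<and> eps i = -1}. psign (p i) * wt c i h) =
          th h / 2 * (\<Sum>i\<in>{i. m i = 1/2 \<and> eps i = -1}. psign (p i))"
      using N3[OF h, of "\<lambda>z. z = -1"] by (simp add: complex_eq_iff)
    then show ?thesis unfolding Vsplit Xp_def Xm_def .
  qed
  let ?An = "{i. m i = 1/2 \<and> eps i \<noteq> -1}" and ?Bn = "{k. m k = -1/2 \<and> eps k \<noteq> -1}"
  have F8: "(\<Sum>k\<in>?Bn. T k) = (\<Sum>i\<in>?An. psign (p i) * (of_real (s i) + 1) * (wt c i h - th h))"
    unfolding T_def by (rule N1[OF h])
  have F9: "(\<Sum>i\<in>?An. psign (p i) * of_real (s i)) = 0" by (rule N2)
  have F10: "(\<Sum>i\<in>?An. psign (p i) * wt c i h) = th h / 2 * (\<Sum>i\<in>?An. psign (p i))"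
    using N3[OF h, of "\<lambda>z. z \<noteq> -1"] by (simp add: complex_eq_iff)
  have Fn: "(\<Sum>k\<in>?Bn. T k) - (\<Sum>i\<in>?An. T i) =
     (\<Sum>i\<in>?An. psign (p i) * wt c i h) - th h * (\<Sum>i\<in>?An. psign (p i)) - th h * (\<Sum>i\<in>?An. psign (p i) * of_real (s i))"
  proof -
    have "(\<Sum>k\<in>?Bn. T k) - (\<Sum>i\<in>?An. T i) =
       (\<Sum>i\<in>?An. psign (p i) * (of_real (s i) + 1) * (wt c i h - th h)) - (\<Sum>i\<in>?An. T i)"
      by (simp only: F8)
    also have "\<dots> = (\<Sum>i\<in>?An. psign (p i) * wt c i h - th h * psign (p i) - th h * (psign (p i) * of_real (s i)))"
      unfolding T_def sum_subtractf[symmetric] by (rule sum.cong) (simp_all add: algebra_simps)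
    finally have "(\<Sum>k\<in>?Bn. T k) - (\<Sum>i\<in>?An. T i) =
       (\<Sum>i\<in>?An. psign (p i) * wt c i h - th h * psign (p i) - th h * (psign (p i) * of_real (s i)))" .
    then show ?thesis by (simp only: sum_subtractf sum_distrib_left)
  qed
  have "(\<Sum>k\<in>{k. m k = -1/2}. T k) - (\<Sum>i\<in>{i. m i = 1/2}. T i) =
     ((\<Sum>k\<in>?Bn. T k) - (\<Sum>i\<in>?An. T i)) + (\<Sum>i\<in>{i\<in>Np. m i = -1/2}. T i) + (\<Sum>i\<in>{i\<in>Nm. m i = -1/2}. T i)
       - (\<Sum>i\<in>{i\<in>Np. m i = 1/2}. T i) - (\<Sum>i\<in>{i\<in>Nm. m i = 1/2}. T i)"
    unfolding splitA[of T] splitB[of T] by (simp add: algebra_simps)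
  also have "\<dots> = - (th h / 2) * ((\<Sum>i\<in>?An. psign (p i)) + (\<Sum>i\<in>{i\<in>Np. m i = 1/2}. psign (p i)) + (\<Sum>i\<in>{i\<in>Nm. m i = 1/2}. psign (p i)))"
    unfolding Fn F1 F2 F3 F4 F9 F10 using F7 by (simp add: algebra_simps)
  also have "\<dots> = - (th h / 2) * (\<Sum>i\<in>{i. m i = 1/2}. psign (p i))"
    unfolding splitA[of "\<lambda>i. psign (p i)"] ..
  finally show ?thesis unfolding T_def .
qed

lemma PAB: "(\<Sum>k\<in>{k. m k = -1/2}. psign (p k)) = (\<Sum>i\<in>{i. m i = 1/2}. psign (p i))"
proof (rule sum_fiber[where kA = p and kB = p])
  fix v
  have "card {i. m i = 1/2 \<and> p i = v} \<le> card {k. m k = -1/2 \<and> p k = v}"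
    by (rule cnt_f) (use c_props p_jf in auto)
  moreover have "card {k. m k = -1/2 \<and> p k = v} \<le> card {i. m i = 1/2 \<and> p i = v}"
    by (rule cnt_e) (use c_props p_ie in auto)
  ultimately show "card {k \<in> {k. m k = -1/2}. p k = v} = card {i \<in> {i. m i = 1/2}. p i = v}" by simp
qed simp_all

lemma hv_val: "hv = 2 + (\<Sum>i\<in>{i. m i = 1/2}. psign (p i)) / 2"
proof -
  have "hv = (\<Sum>i\<in>UNIV. psign (p i) * (of_real (m i))^2)" by (rule hv_formula)
  also have "\<dots> = (\<Sum>i\<in>UNIV \<inter> {i. m i = 0}. psign (p i) * (of_real (m i))^2)
     + (\<Sum>i\<in>{i. m i = 1/2}. psign (p i) * (of_real (m i))^2) + (\<Sum>i\<in>{i. m i = -1/2}. psign (p i) * (of_real (m i))^2)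
     + psign (p ie) * (of_real (m ie))^2 + psign (p jf) * (of_real (m jf))^2"
    by (rule sum_part) auto
  also have "(\<Sum>i\<in>UNIV \<inter> {i. m i = 0}. psign (p i) * (of_real (m i))^2) = 0" by simp
  also have "(\<Sum>i\<in>{i. m i = 1/2}. psign (p i) * (of_real (m i))^2) = (\<Sum>i\<in>{i. m i = 1/2}. psign (p i)) / 4"
    unfolding sum_divide_distrib
  proof (rule sum.cong[OF refl])
    fix i assume "i \<in> {i. m i = 1/2}"
    then have hs: "m i = 1/2" by simp
    show "psign (p i) * (of_real (m i))^2 = psign (p i) / 4" unfolding hs by (simp add: power2_eq_square)
  qed
  also have "(\<Sum>i\<in>{i. m i = -1/2}. psign (p i) * (of_real (m i))^2) = (\<Sum>i\<in>{i. m i = -1/2}. psign (p i)) / 4"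
    unfolding sum_divide_distrib
  proof (rule sum.cong[OF refl])
    fix i assume "i \<in> {i. m i = -1/2}"
    then have hs: "m i = -1/2" by simp
    show "psign (p i) * (of_real (m i))^2 = psign (p i) / 4" unfolding hs by (simp add: power2_eq_square)
  qed
  also have "psign (p ie) * (of_real (m ie))^2 = 1" using p_ie m_ie by (simp add: psign_def)
  also have "psign (p jf) * (of_real (m jf))^2 = 1" using p_jf m_jf by (simp add: psign_def)
  finally show ?thesis unfolding PAB by simp
qed

end


context ctx begin

lemma E_final: "(\<Sum>i\<in>{i\<in>Nm. m i = 1/2}. psign (p i)) - (\<Sum>i\<in>{i\<in>Np. m i = 1/2}. psign (p i)) = - of_nat (card Z0)"
proof -
  define Vp where "Vp = Np \<inter> {i. m i = 1/2}"
  define Vm where "Vm = Nm \<inter> {i. m i = 1/2}"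
  define S2 where "S2 = Nm \<inter> {i. m i = 1/2} - Z0"
  have mi1: "max_isotropic (\<lambda>a b. frm B f (brk c a b)) (supp_on V) (supp_on Vp)"
    using iii unfolding Vset_eq Vp_def .
  have mi2: "max_isotropic (\<lambda>a b. frm B f (brk c a b)) (supp_on V) (supp_on S2)"
    using iv(3) unfolding Vset_eq S2_def .
  have Z0Vm: "Z0 \<subseteq> Vm" using iv(1) unfolding Vm_def by blast
  have VpV: "Vp \<subseteq> V" unfolding Vp_def V_def using half_Np_eps by auto
  have VmV: "Vm \<subseteq> V" unfolding Vm_def V_def using half_Nm_eps by auto
  have VVp: "V - Vp = Vm"
    unfolding Vp_def Vm_def V_def using half_sig half_Nm_eps disj(3) by auto
  have S2V: "S2 \<subseteq> V" using VmV unfolding S2_def Vm_def by auto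
  have VS2: "V - S2 = Vp \<union> Z0"
  proof -
    have "V = Vp \<union> Vm" using VVp VpV by auto
    moreover have "Vp \<inter> Vm = {}" unfolding Vp_def Vm_def using disj(3) by auto
    ultimately show ?thesis using Z0Vm unfolding S2_def Vm_def by auto
  qed
  have cVm: "card (Vm \<inter> {i. p i = P}) = card (S2 \<inter> {i. p i = P}) + card (Z0 \<inter> {i. p i = P})" for P
  proof -
    have "Vm \<inter> {i. p i = P} = (S2 \<inter> {i. p i = P}) \<union> (Z0 \<inter> {i. p i = P})"
      using Z0Vm unfolding S2_def Vm_def by auto
    moreover have "(S2 \<inter> {i. p i = P}) \<inter> (Z0 \<inter> {i. p i = P}) = {}" unfolding S2_def by auto
    ultimately show ?thesis by (simp add: card_Un_disjoint)
  qed
  have cVpZ: "card ((Vp \<union> Z0) \<inter> {i. p i = P}) = card (Vp \<inter> {i. p i = P}) + card (Z0 \<inter> {i. p i = P})" for P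
  proof -
    have "(Vp \<union> Z0) \<inter> {i. p i = P} = (Vp \<inter> {i. p i = P}) \<union> (Z0 \<inter> {i. p i = P})" by auto
    moreover have "(Vp \<inter> {i. p i = P}) \<inter> (Z0 \<inter> {i. p i = P}) = {}"
      using Z0Vm disj(3) unfolding Vp_def Vm_def by auto
    ultimately show ?thesis by (simp add: card_Un_disjoint)
  qed
  have cZ: "card Z0 = card (Z0 \<inter> {i. p i = False}) + card (Z0 \<inter> {i. p i = True})"
  proof -
    have "Z0 = (Z0 \<inter> {i. p i = False}) \<union> (Z0 \<inter> {i. p i = True})" by auto
    moreover have "(Z0 \<inter> {i. p i = False}) \<inter> (Z0 \<inter> {i. p i = True}) = {}" by auto
    ultimately show ?thesis by (metis card_Un_disjoint finite)
  qed
  have e1: "card (Vm \<inter> {i. p i = False}) \<le> card (Vp \<inter> {i. p i = False})"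
    using E_even[OF mi1] unfolding VVp .
  have e2: "card ((Vp \<union> Z0) \<inter> {i. p i = False}) \<le> card (S2 \<inter> {i. p i = False})"
    using E_even[OF mi2] unfolding VS2 .
  have o1: "card (Vm \<inter> {i. p i = True}) \<le> card (Vp \<inter> {i. p i = True}) + 1"
    using E_odd[OF mi1] unfolding VVp .
  have o2: "card ((Vp \<union> Z0) \<inter> {i. p i = True}) \<le> card (S2 \<inter> {i. p i = True}) + 1"
    using E_odd[OF mi2] unfolding VS2 .
  have i1: "card (Vp \<inter> {i. p i = True}) \<le> card (Vm \<inter> {i. p i = True})"
    using E_iso[OF mi1 VpV] unfolding VVp .
  have i2: "card (S2 \<inter> {i. p i = True}) \<le> card ((Vp \<union> Z0) \<inter> {i. p i = True})"
    using E_iso[OF mi2 S2V] unfolding VS2 .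
  have z1: "card Z0 \<le> 1" by (rule iv(2))
  define aF where "aF = card (Vp \<inter> {i. p i = False})"
  define aT where "aT = card (Vp \<inter> {i. p i = True})"
  define bF where "bF = card (S2 \<inter> {i. p i = False})"
  define bT where "bT = card (S2 \<inter> {i. p i = True})"
  define zF where "zF = card (Z0 \<inter> {i. p i = False})"
  define zT where "zT = card (Z0 \<inter> {i. p i = True})"
  have ar: "bF + zF \<le> aF" "aF + zF \<le> bF" "bT + zT \<le> aT + 1" "aT + zT \<le> bT + 1"
     "aT \<le> bT + zT" "bT \<le> aT + zT" "zF + zT \<le> 1"
    using e1 e2 o1 o2 i1 i2 z1 cZ unfolding cVm cVpZ aF_def aT_def bF_def bT_def zF_def zT_def by simp_all
  then have zF0: "zF = 0" and abF: "aF = bF" and abT: "aT = bT" by arith+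
  have "(\<Sum>i\<in>{i\<in>Nm. m i = 1/2}. psign (p i)) = of_nat (bF + zF) - of_nat (bT + zT)"
  proof -
    have eqV: "{i\<in>Nm. m i = 1/2} = Vm" unfolding Vm_def by auto
    show ?thesis unfolding eqV sum_psign cVm bF_def zF_def bT_def zT_def by simp
  qed
  moreover have "(\<Sum>i\<in>{i\<in>Np. m i = 1/2}. psign (p i)) = of_nat aF - of_nat aT"
  proof -
    have eqV: "{i\<in>Np. m i = 1/2} = Vp" unfolding Vp_def by auto
    show ?thesis unfolding eqV sum_psign aF_def aT_def ..
  qed
  moreover have "card Z0 = zT" using cZ zF0 unfolding zF_def zT_def by simp
  ultimately show ?thesis using zF0 abF abT by simp
qed

lemma a_core: "(\<Sum>i\<in>{i. m i = 1/2}. psign (p i) * of_real (s i)) = - of_nat (card Z0) / 2"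
proof -
  have "(\<Sum>i\<in>{i. m i = 1/2}. psign (p i) * of_real (s i)) =
     (\<Sum>i\<in>{i. m i = 1/2 \<and> eps i \<noteq> -1}. psign (p i) * of_real (s i))
     + (\<Sum>i\<in>{i\<in>Np. m i = 1/2}. psign (p i) * of_real (s i)) + (\<Sum>i\<in>{i\<in>Nm. m i = 1/2}. psign (p i) * of_real (s i))"
    by (rule splitA)
  also have "(\<Sum>i\<in>{i. m i = 1/2 \<and> eps i \<noteq> -1}. psign (p i) * of_real (s i)) = 0" by (rule N2)
  also have "(\<Sum>i\<in>{i\<in>Np. m i = 1/2}. psign (p i) * of_real (s i)) = - (1/2) * (\<Sum>i\<in>{i\<in>Np. m i = 1/2}. psign (p i))"
    unfolding sum_distrib_left
  proof (rule sum.cong[OF refl])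
    fix i assume i: "i \<in> {i\<in>Np. m i = 1/2}"
    have hs: "s i = - (1/2)" using i sval_Np by simp
    show "psign (p i) * of_real (s i) = - (1/2) * psign (p i)" unfolding hs by simp
  qed
  also have "(\<Sum>i\<in>{i\<in>Nm. m i = 1/2}. psign (p i) * of_real (s i)) = (1/2) * (\<Sum>i\<in>{i\<in>Nm. m i = 1/2}. psign (p i))"
    unfolding sum_distrib_left
  proof (rule sum.cong[OF refl])
    fix i assume i: "i \<in> {i\<in>Nm. m i = 1/2}"
    have "i \<notin> Np" using i disj(3) by auto
    moreover have "eps i = -1" using i half_Nm_eps by auto
    ultimately have hs: "s i = 1/2" using s_sig_p i by auto
    show "psign (p i) * of_real (s i) = 1/2 * psign (p i)" unfolding hs by simp
  qed
  finally have f1: "(\<Sum>i\<in>{i. m i = 1/2}. psign (p i) * of_real (s i)) =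
     0 + - (1/2) * (\<Sum>i\<in>{i\<in>Np. m i = 1/2}. psign (p i)) + (1/2) * (\<Sum>i\<in>{i\<in>Nm. m i = 1/2}. psign (p i))" .
  have "(\<Sum>i\<in>{i. m i = 1/2}. psign (p i) * of_real (s i)) =
     (1/2) * ((\<Sum>i\<in>{i\<in>Nm. m i = 1/2}. psign (p i)) - (\<Sum>i\<in>{i\<in>Np. m i = 1/2}. psign (p i)))"
    unfolding f1 by (simp add: algebra_simps)
  then show ?thesis unfolding E_final by simp
qed

lemma b_main:
  assumes h: "h \<in> supp_on H"
  shows "gam c p Np m mu (- H) h =
            2 * gam c p Np m mu {i. i \<notin> H \<and> m i = 1/2} h + gam c p Np m mu {i. i \<notin> H \<and> m i = 0} h
            - (1/2) * (hv - 1) * (2 * frm B x h)"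
proof -
  define T where "T i = psign (p i) * of_real (s i) * wt c i h" for i
  have A: "{i. i \<notin> H \<and> m i = 1/2} = {i. m i = 1/2}" using H_ev_i by auto
  have G: "(- H) \<inter> {i. m i = 0} = {i. i \<notin> H \<and> m i = 0}" by auto
  have s1: "sum T (- H) = sum T ((- H) \<inter> {i. m i = 0}) + sum T {i. m i = 1/2} + sum T {i. m i = -1/2} + T ie + T jf"
    by (rule sum_part) (use H_ev_i m_ie m_jf in auto)
  have tie: "T ie = 0" unfolding T_def using s_ie by simp
  have tjf: "T jf = - th h" unfolding T_def using s_jf p_jf wt_jf[OF h] by (simp add: psign_def)
  have s2: "sum T {i. m i = -1/2} = sum T {i. m i = 1/2} - (th h / 2) * (\<Sum>i\<in>{i. m i = 1/2}. psign (p i))"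
    using b_core[OF h] unfolding T_def by (simp add: algebra_simps)
  have "gam c p Np m mu (- H) h = 1/2 * sum T (- H)" unfolding gam_def T_def ..
  also have "\<dots> = 1/2 * (sum T {i. i \<notin> H \<and> m i = 0} + sum T {i. m i = 1/2} +
      (sum T {i. m i = 1/2} - (th h / 2) * (\<Sum>i\<in>{i. m i = 1/2}. psign (p i))) - th h)"
    unfolding s1 s2 tie tjf G by simp
  also have "\<dots> = 2 * (1/2 * sum T {i. m i = 1/2}) + 1/2 * sum T {i. i \<notin> H \<and> m i = 0}
            - (1/2) * ((2 + (\<Sum>i\<in>{i. m i = 1/2}. psign (p i)) / 2) - 1) * (2 * frm B x h)"
    by (simp add: field_simps)
  also have "\<dots> = 2 * gam c p Np m mu {i. i \<notin> H \<and> m i = 1/2} h + gam c p Np m mu {i. i \<notin> H \<and> m i = 0} h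
            - (1/2) * (hv - 1) * (2 * frm B x h)"
    unfolding gam_def A T_def hv_val ..
  finally show ?thesis .
qed

end

theorem proposition4p2:
  fixes p :: "'i::finite \<Rightarrow> bool"
    and c :: "'i \<Rightarrow> 'i \<Rightarrow> 'i \<Rightarrow> complex"
    and B :: "'i \<Rightarrow> 'i \<Rightarrow> complex"
    and hv :: complex
    and x e f :: "'i vec"
    and m mu :: "'i \<Rightarrow> real"
    and hC :: "'i vec set"
    and H Np Nm Z0 :: "'i set"
  assumes simple: "simple_lie_superalgebra p c"
    and form: "good_form p c B"
    and hvee: "dual_coxeter c B hv"
    \<comment> \<open>sl_2-triple and minimal grading by ad x (u_i in g_{m_i})\<close>
    and sl2: "brk c x e = e" "brk c x f = vsc (-1) f" "brk c e f = x"
    and ef_even: "e \<in> supp_on {i. \<not> p i}" "f \<in> supp_on {i. \<not> p i}" "e \<noteq> vzero"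
    and grading: "\<forall>i. brk c x (ub i) = vsc (of_real (m i)) (ub i)"
    and grading_vals: "\<forall>i. m i \<in> {-1, -1/2, 0, 1/2, 1}"
    and g1: "supp_on {i. m i = 1} = {vsc t e |t. True}"
    and gm1: "supp_on {i. m i = -1} = {vsc t f |t. True}"
    \<comment> \<open>Cartan subalgebra hC of the even part of g_0, sigma-invariant; x = theta/2 via the form,
        (theta|theta) = 2, e and f root vectors for theta and -theta\<close>
    and cartan: "cartan_sub c (supp_on {i. m i = 0 \<and> \<not> p i}) hC"
    and x_in: "x \<in> hC"
    and roots: "\<forall>h\<in>hC. brk c h e = vsc (2 * frm B x h) e"
               "\<forall>h\<in>hC. brk c h f = vsc (- (2 * frm B x h)) f"
    and theta_norm: "frm B x x = 1/2"
    \<comment> \<open>sigma: automorphism preserving the form, fixing x and f\<close>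
    and sig_aut: "\<forall>a b. sig mu (brk c a b) = brk c (sig mu a) (sig mu b)"
    and sig_form: "\<forall>a b. frm B (sig mu a) (sig mu b) = frm B a b"
    and sig_x: "sig mu x = x" and sig_f: "sig mu f = f"
    and hC_inv: "sig mu ` hC \<subseteq> hC"
    \<comment> \<open>basis of h^sigma, weight vectors\<close>
    and H_basis: "supp_on H = {a \<in> hC. sig mu a = a}"
    and weights: "\<forall>i. \<forall>h\<in>supp_on H. \<exists>t. brk c h (ub i) = vsc t (ub i)"
    \<comment> \<open>g(sigma) = n_- + h^sigma + n_+ (basis indices)\<close>
    and decomp: "{i. cis (2 * pi * mu i) = cis (pi * (2 * m i))} = Np \<union> H \<union> Nm"
    and disj: "Np \<inter> H = {}" "Nm \<inter> H = {}" "Np \<inter> Nm = {}"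
    and nplus: "subalg c (supp_on Np)" "nilpotent_sub c (supp_on Np)"
               "\<forall>a\<in>supp_on Np. \<forall>b\<in>supp_on Np. frm B a b = 0"
               "\<forall>h\<in>supp_on H. \<forall>a\<in>supp_on Np. brk c h a \<in> supp_on Np"
    and nminus: "subalg c (supp_on Nm)" "nilpotent_sub c (supp_on Nm)"
               "\<forall>a\<in>supp_on Nm. \<forall>b\<in>supp_on Nm. frm B a b = 0"
               "\<forall>h\<in>supp_on H. \<forall>a\<in>supp_on Nm. brk c h a \<in> supp_on Nm"
    and f_plus: "f \<in> supp_on Np"
    and iii: "max_isotropic (\<lambda>a b. frm B f (brk c a b))
                (supp_on {i. cis (2 * pi * mu i) = cis (pi * (2 * m i)) \<and> m i = 1/2})
                (supp_on (Np \<inter> {i. m i = 1/2}))"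
    and iv: "Z0 \<subseteq> Nm \<inter> {i. m i = 1/2}" "card Z0 \<le> 1"
            "max_isotropic (\<lambda>a b. frm B f (brk c a b))
                (supp_on {i. cis (2 * pi * mu i) = cis (pi * (2 * m i)) \<and> m i = 1/2})
                (supp_on (Nm \<inter> {i. m i = 1/2} - Z0))"
  shows "(2 * gam c p Np m mu (- H) x = 1 - hv - of_nat (card Z0) / 2) \<and>
          (\<forall>h\<in>supp_on H. gam c p Np m mu (- H) h =
            2 * gam c p Np m mu {i. i \<notin> H \<and> m i = 1/2} h + gam c p Np m mu {i. i \<notin> H \<and> m i = 0} h
            - (1/2) * (hv - 1) * (2 * frm B x h)) \<and>
          (\<forall>h\<in>{h \<in> supp_on H. brk c h f = vzero}.
            gam c p Np m mu {i. i \<notin> H \<and> m i = 1/2} h =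
            (1/2) * (gam c p Np m mu (- H) h - gam c p Np m mu {i. i \<notin> H \<and> m i = 0} h))"
proof -
  interpret C: ctx p c B hv x e f m mu hC H Np Nm Z0
    by (unfold_locales) (rule assms)+
  have b: "\<forall>h\<in>supp_on H. gam c p Np m mu (- H) h =
            2 * gam c p Np m mu {i. i \<notin> H \<and> m i = 1/2} h + gam c p Np m mu {i. i \<notin> H \<and> m i = 0} h
            - (1/2) * (hv - 1) * (2 * frm B x h)"
    using C.b_main by blast
  have a: "2 * gam c p Np m mu (- H) x = 1 - hv - of_nat (card Z0) / 2"
  proof -
    have bx: "gam c p Np m mu (- H) x =
            2 * gam c p Np m mu {i. i \<notin> H \<and> m i = 1/2} x + gam c p Np m mu {i. i \<notin> H \<and> m i = 0} x
            - (1/2) * (hv - 1) * (2 * frm B x x)"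
      using b C.x_H by blast
    have A: "{i. i \<notin> H \<and> m i = 1/2} = {i. m i = 1/2}" using C.H_ev_i by auto
    have g0: "gam c p Np m mu {i. i \<notin> H \<and> m i = 0} x = 0"
      unfolding gam_def by (simp add: C.wt_x)
    have gA: "gam c p Np m mu {i. i \<notin> H \<and> m i = 1/2} x = - of_nat (card Z0) / 8"
    proof -
      have "gam c p Np m mu {i. i \<notin> H \<and> m i = 1/2} x =
         1/2 * (\<Sum>i\<in>{i. m i = 1/2}. 1/2 * (psign (p i) * of_real (sval Np m mu i)))"
        unfolding gam_def A
      proof (intro arg_cong[where f = "\<lambda>z. 1/2 * z"] sum.cong[OF refl])
        fix i assume "i \<in> {i. m i = 1/2}"
        then have hs: "m i = 1/2" by simp
        show "psign (p i) * of_real (sval Np m mu i) * wt c i x = 1/2 * (psign (p i) * of_real (sval Np m mu i))"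
          unfolding C.wt_x hs by simp
      qed
      also have "\<dots> = 1/4 * (\<Sum>i\<in>{i. m i = 1/2}. psign (p i) * of_real (sval Np m mu i))"
        by (simp only: sum_distrib_left[symmetric]) simp
      also have "\<dots> = - of_nat (card Z0) / 8" unfolding C.a_core by simp
      finally show ?thesis .
    qed
    have th1: "2 * frm B x x = 1" unfolding theta_norm by simp
    have gx: "gam c p Np m mu (- H) x = 2 * (- of_nat (card Z0) / 8) + 0 - (1/2) * (hv - 1) * 1"
      using bx unfolding g0 gA th1 .
    show ?thesis unfolding gx by (simp add: field_simps)
  qed
  have cc: "\<forall>h\<in>{h \<in> supp_on H. brk c h f = vzero}.
            gam c p Np m mu {i. i \<notin> H \<and> m i = 1/2} h =
            (1/2) * (gam c p Np m mu (- H) h - gam c p Np m mu {i. i \<notin> H \<and> m i = 0} h)"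
  proof
    fix h assume h: "h \<in> {h \<in> supp_on H. brk c h f = vzero}"
    then have hH: "h \<in> supp_on H" and hf: "brk c h f = vzero" by auto
    have bf: "brk c h f = vsc (- (2 * frm B x h)) f" using roots(2) hH C.H_sub by auto
    have "vsc (- (2 * frm B x h)) f = vzero" using hf unfolding bf .
    then have "vsc (- (2 * frm B x h)) f C.jf = vzero C.jf" by simp
    then have "vsc (- (2 * frm B x h)) f C.jf = 0" by (simp add: vzero_def)
    then have th0: "2 * frm B x h = 0" using C.jf_props(3) by (simp add: vsc_def)
    show "gam c p Np m mu {i. i \<notin> H \<and> m i = 1/2} h =
            (1/2) * (gam c p Np m mu (- H) h - gam c p Np m mu {i. i \<notin> H \<and> m i = 0} h)"
    proof -
      have bh: "gam c p Np m mu (- H) h =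
            2 * gam c p Np m mu {i. i \<notin> H \<and> m i = 1/2} h + gam c p Np m mu {i. i \<notin> H \<and> m i = 0} h
            - (1/2) * (hv - 1) * (2 * frm B x h)" using b hH by blast
      have bh0: "gam c p Np m mu (- H) h =
            2 * gam c p Np m mu {i. i \<notin> H \<and> m i = 1/2} h + gam c p Np m mu {i. i \<notin> H \<and> m i = 0} h"
        using bh unfolding th0 by simp
      show ?thesis unfolding bh0 by simp
    qed
  qed
  show ?thesis using a b cc by blast
qed


end
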